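(* Let $B\subseteq C$ be finite sets of names, let $a\in(\mathbb{A}\setminus B)\cup\{*\}$, let $\phi$ be a bar formula, let $S$ be a context, and let $v$ be a bar string (with $v\in[S]$ and $\mathrm{FN}(\phi)\subseteq S$). Suppose that (i) if $a\neq *$, then every name having a free occurrence in $v$ before the first free occurrence of $a$ in $v$ is contained in $B$; and (ii) if some name occurring freely in $v$ is not in $B$ and the first such name $d$ lies in $\mathrm{FN}(\phi)$, then $d\in C$. Then for all $n$ with $|v|<n$: $S,v\models\phi$ iff $S,v\models\phi^B_C(a)_n$.
   Context: Names $\mathbb{A}$ countably infinite; $*\notin\mathbb{A}$ a marker. $G$ finite permutations; $[\mathbb{A}]X$ abstraction sets ($\mathbb{A}\times X$ modulo $(a,x)\sim(b,y)$ iff $(a\,c)\cdot x=(b\,c)\cdot y$ for $c$ outside the supports; class $\langle a\rangle x$). $\overline{\mathbb{A}}=\mathbb{A}\cup\{|a\}$; bar strings are words over it; $\equiv_\alpha$ least equivalence with $w|av\equiv_\alpha w|bu$ whenever $\langle a\rangle v=\langle b\rangle u$. An occurrence of a plain name $a$ is free if no $|a$ occurs to its left; $\mathrm{FN}(w)$; $[S]=\{w\mid\mathrm{FN}(w)\subseteq S\}$; $|v|$ is the length. Bar formulae $\phi::=\epsilon\mid\neg\epsilon\mid\phi\wedge\phi\mid\phi\vee\phi\mid\Diamond_\sigma\phi\mid\Box_\sigma\phi\mid X\mid\mu X.\phi$ ($\sigma\in\overline{\mathbb{A}}$), fixpoint variables guarded by modalities, implicitly annotated with the free names of their binding $\mu$-expression;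 $\top=\epsilon\vee\neg\epsilon$, $\bot=\epsilon\wedge\neg\epsilon$; $\mathrm{FN}(\phi)$: names $a$ with $\Diamond_a/\Box_a$ outside the scope of $\Diamond_{|a}/\Box_{|a}$. Semantics ($S$ finite, $\mathrm{FN}(\phi)\subseteq S$, $w\in[S]$): Booleans usual; $\epsilon$: $w$ empty; $\neg\epsilon$: nonempty; $\mu X.\phi$: $\phi[\mu X.\phi/X]$; $\Diamond_a\phi$: $w=av$, $S,v\models\phi$; $\Box_a\phi$: $w=av\Rightarrow S,v\models\phi$; $\Diamond_{|a}\phi$: exist $\psi,v,b$ with $w\equiv_\alpha|bv$, $\langle a\rangle\phi=\langle b\rangle\psi$, $S\cup\{b\},v\models\psi$; $\Box_{|a}\phi$: for all such $\psi,v,b$, $S\cup\{b\},v\models\psi$. Restriction: for $B\subseteq C$, $a\in(\mathbb{A}\setminus B)\cup\{*\}$, define $\phi^B_C(a)_0=\top$ and for $n>0$: $\epsilon^B_C(a)_n=\epsilon$; $(\neg\epsilon)^B_C(a)_n=\neg\epsilon$; $(\psi\wedge\chi)^B_C(a)_n=\psi^B_C(a)_n\wedge\chi^B_C(a)_n$, similarly for $\vee$; $(\Diamond_{|b}\psi)^B_C(a)_n=\Diamond_{|b}(\psi^{B\cup\{b\}}_{C\cup\{b\}}(a)_{n-1})$, same with $\Box_{|b}$; $(\mu X.\psi)^B_C(a)_n=(\psi[\mu X.\psi/X])^B_C(a)_n$; $(\Diamond_b\psi)^B_C(a)_n$ is $\bot$ if $b\notin C$, $\Diamond_b(\psi^B_C(a)_{n-1})$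 if $b\in B$, and $\Diamond_b(\psi^\emptyset_{\mathrm{FN}(\psi)}( * )_{n-1})$ if $b\in C\setminus B$; $(\Box_b\psi)^B_C(a)_n$ is $\epsilon\vee\Diamond_{|c}\top\vee\bigvee_{d\in B\cup\{a\}}\Diamond_d\top$ if $b\notin C,a\neq *$; $\Box_b(\psi^\emptyset_{\mathrm{FN}(\psi)}( * )_{n-1})$ if $b\notin C,a=*$; $\Box_b(\psi^B_C(a)_{n-1})$ if $b\in B$; and if $b\in C\setminus B$ it is: $\Box_b(\psi^\emptyset_{\mathrm{FN}(\psi)}( * )_{n-1})$ if $a=*$; $\epsilon\vee\Diamond_{|c}\top\vee\bigvee_{d\in B}\Diamond_d\top\vee\Diamond_a(\psi^\emptyset_{\mathrm{FN}(\psi)}( * )_{n-1})$ if $a=b$; $\epsilon\vee\Diamond_{|c}\top\vee\bigvee_{d\in B\cup\{a\}}\Diamond_d\top$ if $*\neq a\neq b$. (Here $c$ is any name.) *)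

theory Defs
  imports Main
begin

(* Names: the countably infinite set of names is modelled by nat.
   The marker * is modelled by None :: nat option (names a are Some a). *)
type_synonym name = nat

datatype bl = Pl name | Br name   (* Pl a = plain name a,  Br a = bar name |a *)

type_synonym bstr = "bl list"

definition swap :: "name \<Rightarrow> name \<Rightarrow> name \<Rightarrow> name" where
  "swap a b c = (if c = a then b else if c = b then a else c)"

fun perm_bl :: "name \<Rightarrow> name \<Rightarrow> bl \<Rightarrow> bl" where
  "perm_bl a b (Pl c) = Pl (swap a b c)"
| "perm_bl a b (Br c) = Br (swap a b c)"

definition perm_str :: "name \<Rightarrow> name \<Rightarrow> bstr \<Rightarrow> bstr" where
  "perm_str a b w = map (perm_bl a b) w"

fun name_of :: "bl \<Rightarrow> name" where
  "name_of (Pl c) = c" | "name_of (Br c) = c"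

definition names_str :: "bstr \<Rightarrow> name set" where
  "names_str w = name_of ` set w"

definition abs_eq_str :: "name \<Rightarrow> bstr \<Rightarrow> name \<Rightarrow> bstr \<Rightarrow> bool" where
  "abs_eq_str a v b u \<longleftrightarrow>
     (\<exists>c. c \<notin> {a, b} \<union> names_str v \<union> names_str u \<and> perm_str a c v = perm_str b c u)"

inductive alpha :: "bstr \<Rightarrow> bstr \<Rightarrow> bool" where
  alpha_base: "abs_eq_str a v b u \<Longrightarrow> alpha (w @ Br a # v) (w @ Br b # u)"
| alpha_refl: "alpha w w"
| alpha_sym: "alpha w u \<Longrightarrow> alpha u w"
| alpha_trans: "alpha w u \<Longrightarrow> alpha u x \<Longrightarrow> alpha w x"

fun FN_str :: "bstr \<Rightarrow> name set" where
  "FN_str [] = {}"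
| "FN_str (Pl a # w) = insert a (FN_str w)"
| "FN_str (Br a # w) = FN_str w - {a}"

definition free_occ :: "bstr \<Rightarrow> nat \<Rightarrow> name \<Rightarrow> bool" where
  "free_occ w i d \<longleftrightarrow> i < length w \<and> w ! i = Pl d \<and> Br d \<notin> set (take i w)"

type_synonym fvar = nat

datatype form =
    Eps
  | NEps
  | And form form
  | Or form form
  | Dia bl form
  | Box bl form
  | Var fvar
  | Mu fvar form

definition Top :: form where "Top = Or Eps NEps"
definition Bot :: form where "Bot = And Eps NEps"

primrec perm_form :: "name \<Rightarrow> name \<Rightarrow> form \<Rightarrow> form" where
  "perm_form a b Eps = Eps"
| "perm_form a b NEps = NEps"
| "perm_form a b (And p q) = And (perm_form a b p) (perm_form a b q)"
| "perm_form a b (Or p q) = Or (perm_form a b p) (perm_form a b q)"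
| "perm_form a b (Dia l p) = Dia (perm_bl a b l) (perm_form a b p)"
| "perm_form a b (Box l p) = Box (perm_bl a b l) (perm_form a b p)"
| "perm_form a b (Var X) = Var X"
| "perm_form a b (Mu X p) = Mu X (perm_form a b p)"

lemma size_perm_form[simp]: "size (perm_form a b p) = size p"
  by (induction p) auto

primrec names_form :: "form \<Rightarrow> name set" where
  "names_form Eps = {}"
| "names_form NEps = {}"
| "names_form (And p q) = names_form p \<union> names_form q"
| "names_form (Or p q) = names_form p \<union> names_form q"
| "names_form (Dia l p) = insert (name_of l) (names_form p)"
| "names_form (Box l p) = insert (name_of l) (names_form p)"
| "names_form (Var X) = {}"
| "names_form (Mu X p) = names_form p"

primrec FN :: "form \<Rightarrow> name set" where
  "FN Eps = {}"
| "FN NEps = {}"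
| "FN (And p q) = FN p \<union> FN q"
| "FN (Or p q) = FN p \<union> FN q"
| "FN (Dia l p) = (case l of Pl a \<Rightarrow> insert a (FN p) | Br a \<Rightarrow> FN p - {a})"
| "FN (Box l p) = (case l of Pl a \<Rightarrow> insert a (FN p) | Br a \<Rightarrow> FN p - {a})"
| "FN (Var X) = {}"
| "FN (Mu X p) = FN p"

primrec fv :: "form \<Rightarrow> fvar set" where
  "fv Eps = {}"
| "fv NEps = {}"
| "fv (And p q) = fv p \<union> fv q"
| "fv (Or p q) = fv p \<union> fv q"
| "fv (Dia l p) = fv p"
| "fv (Box l p) = fv p"
| "fv (Var X) = {X}"
| "fv (Mu X p) = fv p - {X}"

primrec unguarded :: "fvar \<Rightarrow> form \<Rightarrow> bool" where
  "unguarded X Eps = False"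
| "unguarded X NEps = False"
| "unguarded X (And p q) = (unguarded X p \<or> unguarded X q)"
| "unguarded X (Or p q) = (unguarded X p \<or> unguarded X q)"
| "unguarded X (Dia l p) = False"
| "unguarded X (Box l p) = False"
| "unguarded X (Var Y) = (Y = X)"
| "unguarded X (Mu Y p) = (Y \<noteq> X \<and> unguarded X p)"

primrec guarded :: "form \<Rightarrow> bool" where
  "guarded Eps = True"
| "guarded NEps = True"
| "guarded (And p q) = (guarded p \<and> guarded q)"
| "guarded (Or p q) = (guarded p \<and> guarded q)"
| "guarded (Dia l p) = guarded p"
| "guarded (Box l p) = guarded p"
| "guarded (Var X) = True"
| "guarded (Mu X p) = (\<not> unguarded X p \<and> guarded p)"

definition bar_formula :: "form \<Rightarrow> bool" where
  "bar_formula p \<longleftrightarrow> fv p = {} \<and> guarded p"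

definition fresh :: "name set \<Rightarrow> name" where
  "fresh A = (LEAST c. c \<notin> A)"

(* capture-avoiding substitution  p[t/X]; bar binders |b with b free in t are renamed
   (this is what the implicit annotation of fixpoint variables achieves) *)
function subst :: "form \<Rightarrow> fvar \<Rightarrow> form \<Rightarrow> form" where
  "subst t X Eps = Eps"
| "subst t X NEps = NEps"
| "subst t X (And p q) = And (subst t X p) (subst t X q)"
| "subst t X (Or p q) = Or (subst t X p) (subst t X q)"
| "subst t X (Dia (Pl b) p) = Dia (Pl b) (subst t X p)"
| "subst t X (Box (Pl b) p) = Box (Pl b) (subst t X p)"
| "subst t X (Dia (Br b) p) =
     (if b \<in> FN t then
        (let c = fresh (insert b (names_form p \<union> names_form t))
         in Dia (Br c) (subst t X (perm_form b c p)))
      else Dia (Br b) (subst t X p))"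
| "subst t X (Box (Br b) p) =
     (if b \<in> FN t then
        (let c = fresh (insert b (names_form p \<union> names_form t))
         in Box (Br c) (subst t X (perm_form b c p)))
      else Box (Br b) (subst t X p))"
| "subst t X (Var Y) = (if Y = X then t else Var Y)"
| "subst t X (Mu Y p) = (if Y = X then Mu Y p else Mu Y (subst t X p))"
  by pat_completeness auto
termination
  by (relation "measure (\<lambda>(t, X, p). size p)") auto

definition abs_eq_form :: "name \<Rightarrow> form \<Rightarrow> name \<Rightarrow> form \<Rightarrow> bool" where
  "abs_eq_form a p b q \<longleftrightarrow>
     (\<exists>c. c \<notin> {a, b} \<union> names_form p \<union> names_form q \<and> perm_form a c p = perm_form b c q)"

(* S, w |= phi.  The paper's recursive definition is well-founded for (closed, guarded)
   bar formulae; we take the least relation closed under the clauses, which coincides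
   with it on bar formulae. *)
inductive sat :: "name set \<Rightarrow> bstr \<Rightarrow> form \<Rightarrow> bool" where
  sat_Eps: "sat S [] Eps"
| sat_NEps: "w \<noteq> [] \<Longrightarrow> sat S w NEps"
| sat_And: "sat S w p \<Longrightarrow> sat S w q \<Longrightarrow> sat S w (And p q)"
| sat_Or1: "sat S w p \<Longrightarrow> sat S w (Or p q)"
| sat_Or2: "sat S w q \<Longrightarrow> sat S w (Or p q)"
| sat_Mu: "sat S w (subst (Mu X p) X p) \<Longrightarrow> sat S w (Mu X p)"
| sat_DiaPl: "sat S v p \<Longrightarrow> sat S (Pl a # v) (Dia (Pl a) p)"
| sat_BoxPl: "(\<forall>v. w = Pl a # v \<longrightarrow> sat S v p) \<Longrightarrow> sat S w (Box (Pl a) p)"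
| sat_DiaBr: "alpha w (Br b # v) \<Longrightarrow> abs_eq_form a p b q \<Longrightarrow> sat (insert b S) v q
               \<Longrightarrow> sat S w (Dia (Br a) p)"
| sat_BoxBr: "(\<forall>q v b. alpha w (Br b # v) \<and> abs_eq_form a p b q \<longrightarrow> sat (insert b S) v q)
               \<Longrightarrow> sat S w (Box (Br a) p)"

(* unguarded size, used as termination measure *)
primrec ug :: "form \<Rightarrow> nat" where
  "ug Eps = 1"
| "ug NEps = 1"
| "ug (And p q) = 1 + ug p + ug q"
| "ug (Or p q) = 1 + ug p + ug q"
| "ug (Dia l p) = 1"
| "ug (Box l p) = 1"
| "ug (Var X) = 1"
| "ug (Mu X p) = 1 + ug p"

lemma ug_subst: "\<not> unguarded X p \<Longrightarrow> ug (subst t X p) = ug p"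
  by (induction t X p rule: subst.induct) (auto simp: Let_def)

definition Disj :: "form list \<Rightarrow> form" where
  "Disj ps = foldr Or ps Bot"

definition DiaSet :: "name set \<Rightarrow> form" where
  "DiaSet D = Disj (map (\<lambda>d. Dia (Pl d) Top) (sorted_list_of_set D))"

(* Dia_{|c} Top for an arbitrary name c; we take c = 0 *)
definition DiaBarTop :: form where "DiaBarTop = Dia (Br 0) Top"

(* name for a bound bar name b: b itself, or a fresh name if b clashes with B, C, a
   (bar formulae are taken up to alpha-equivalence) *)
definition bind_name :: "name set \<Rightarrow> name set \<Rightarrow> name option \<Rightarrow> name \<Rightarrow> form \<Rightarrow> name" where
  "bind_name B C a b p =
     (if b \<in> B \<union> C \<union> set_option a then fresh (B \<union> C \<union> set_option a \<union> insert b (names_form p))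
      else b)"

(* restr B C a n phi  =  phi^B_C(a)_n ;  a = None encodes the marker * *)
function restr :: "name set \<Rightarrow> name set \<Rightarrow> name option \<Rightarrow> nat \<Rightarrow> form \<Rightarrow> form" where
  "restr B C a 0 p = Top"
| "restr B C a (Suc m) Eps = Eps"
| "restr B C a (Suc m) NEps = NEps"
| "restr B C a (Suc m) (And p q) = And (restr B C a (Suc m) p) (restr B C a (Suc m) q)"
| "restr B C a (Suc m) (Or p q) = Or (restr B C a (Suc m) p) (restr B C a (Suc m) q)"
| "restr B C a (Suc m) (Dia (Br b) p) =
     (let c = bind_name B C a b p
      in Dia (Br c) (restr (insert c B) (insert c C) a m (perm_form b c p)))"
| "restr B C a (Suc m) (Box (Br b) p) =
     (let c = bind_name B C a b p
      in Box (Br c) (restr (insert c B) (insert c C) a m (perm_form b c p)))"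
| "restr B C a (Suc m) (Mu X p) =
     (if \<not> unguarded X p then restr B C a (Suc m) (subst (Mu X p) X p) else Top)"
| "restr B C a (Suc m) (Var X) = Top"
| "restr B C a (Suc m) (Dia (Pl b) p) =
     (if b \<notin> C then Bot
      else if b \<in> B then Dia (Pl b) (restr B C a m p)
      else Dia (Pl b) (restr {} (FN p) None m p))"
| "restr B C a (Suc m) (Box (Pl b) p) =
     (if b \<notin> C then
        (if a \<noteq> None then Or Eps (Or DiaBarTop (DiaSet (B \<union> set_option a)))
         else Box (Pl b) (restr {} (FN p) None m p))
      else if b \<in> B then Box (Pl b) (restr B C a m p)
      else if a = None then Box (Pl b) (restr {} (FN p) None m p)
      else if a = Some b then
        Or Eps (Or DiaBarTop (Or (DiaSet B) (Dia (Pl b) (restr {} (FN p) None m p))))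
      else Or Eps (Or DiaBarTop (DiaSet (B \<union> set_option a))))"
  by pat_completeness auto
termination
  by (relation "measures [\<lambda>(B, C, a, n, p). n, \<lambda>(B, C, a, n, p). ug p]")
     (auto simp: ug_subst)

end

theory Submission
  imports Defs
begin


lemma swap_simps[simp]:
  "swap a b a = b" "swap a b b = a" "x \<noteq> a \<Longrightarrow> x \<noteq> b \<Longrightarrow> swap a b x = x"
  "swap a b (swap a b x) = x" "swap a a x = x"
  by (auto simp: swap_def)

lemma swap_eq_iff[simp]: "swap a b x = swap a b y \<longleftrightarrow> x = y"
  by (auto simp: swap_def split: if_splits)

lemma inj_swap[simp]: "inj (swap a b)"
  by (rule injI) simp

lemma bij_swap[simp]: "bij (swap a b)"
  by (metis bij_betw_def inj_swap surj_def swap_simps(4))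

lemma swap_inj_comm: "inj f \<Longrightarrow> f (swap a b x) = swap (f a) (f b) (f x)"
  by (auto simp: swap_def inj_eq)

primrec rnb :: "(name \<Rightarrow> name) \<Rightarrow> bl \<Rightarrow> bl" where
  "rnb f (Pl x) = Pl (f x)" | "rnb f (Br x) = Br (f x)"

definition rs :: "(name \<Rightarrow> name) \<Rightarrow> bstr \<Rightarrow> bstr" where
  "rs f w = map (rnb f) w"

primrec rn :: "(name \<Rightarrow> name) \<Rightarrow> form \<Rightarrow> form" where
  "rn f Eps = Eps"
| "rn f NEps = NEps"
| "rn f (And p q) = And (rn f p) (rn f q)"
| "rn f (Or p q) = Or (rn f p) (rn f q)"
| "rn f (Dia l p) = Dia (rnb f l) (rn f p)"
| "rn f (Box l p) = Box (rnb f l) (rn f p)"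
| "rn f (Var X) = Var X"
| "rn f (Mu X p) = Mu X (rn f p)"

lemma perm_bl_rnb: "perm_bl a b l = rnb (swap a b) l"
  by (cases l) auto

lemma perm_str_rs: "perm_str a b w = rs (swap a b) w"
  by (simp add: perm_str_def rs_def perm_bl_rnb[abs_def])

lemma perm_form_rn: "perm_form a b p = rn (swap a b) p"
  by (induction p) (auto simp: perm_bl_rnb)

lemma rnb_comp[simp]: "rnb f (rnb g l) = rnb (f \<circ> g) l"
  by (cases l) auto

lemma rn_comp[simp]: "rn f (rn g p) = rn (f \<circ> g) p"
  by (induction p) (auto simp: comp_def)

lemma rs_comp[simp]: "rs f (rs g w) = rs (f \<circ> g) w"
  by (simp add: rs_def)

lemma rs_simps[simp]: "rs f [] = []" "rs f (l # w) = rnb f l # rs f w"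
  "length (rs f w) = length w"
  by (auto simp: rs_def)

lemma names_str_simps[simp]: "names_str [] = {}" "names_str (l # w) = insert (name_of l) (names_str w)"
  by (auto simp: names_str_def)

lemma name_of_rnb[simp]: "name_of (rnb f l) = f (name_of l)"
  by (cases l) auto

lemma rn_cong: "(\<And>x. x \<in> names_form p \<Longrightarrow> f x = g x) \<Longrightarrow> rn f p = rn g p"
proof (induction p)
  case (Dia l p) then show ?case by (cases l) auto
next
  case (Box l p) then show ?case by (cases l) auto
qed auto

lemma rs_cong: "(\<And>x. x \<in> names_str w \<Longrightarrow> f x = g x) \<Longrightarrow> rs f w = rs g w"
proof (induction w)
  case (Cons l w) then show ?case by (cases l) auto
qed auto

lemma rnb_id[simp]: "rnb id l = l" "rnb (\<lambda>x. x) l = l"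
  by (cases l, auto)+

lemma rn_id[simp]: "rn id p = p" "rn (\<lambda>x. x) p = p"
  by (induction p) auto

lemma rs_id[simp]: "rs id w = w" "rs (\<lambda>x. x) w = w"
  by (induction w) auto

lemma names_rn[simp]: "names_form (rn f p) = f ` names_form p"
  by (induction p) auto

lemma names_rs[simp]: "names_str (rs f w) = f ` names_str w"
  by (induction w) auto

lemma finite_names_form[simp]: "finite (names_form p)"
  by (induction p) auto

lemma finite_names_str[simp]: "finite (names_str w)"
  by (simp add: names_str_def)

lemma FN_sub_names: "FN p \<subseteq> names_form p"
  by (induction p) (auto split: bl.splits)

lemma finite_FN[simp]: "finite (FN p)"
  using FN_sub_names finite_names_form finite_subset by blast

lemma FN_rn: "inj f \<Longrightarrow> FN (rn f p) = f ` FN p"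
proof (induction p)
  case (Dia l p) then show ?case by (cases l) (auto simp: inj_eq)
next
  case (Box l p) then show ?case by (cases l) (auto simp: inj_eq)
qed auto

lemma fv_rn[simp]: "fv (rn f p) = fv p"
  by (induction p) auto
lemma unguarded_rn[simp]: "unguarded X (rn f p) = unguarded X p"
  by (induction p) auto
lemma guarded_rn[simp]: "guarded (rn f p) = guarded p"
  by (induction p) auto
lemma size_rn[simp]: "size (rn f p) = size p"
  by (induction p) auto

lemma ex_fresh: "finite A \<Longrightarrow> \<exists>c::name. c \<notin> A"
  using ex_new_if_finite infinite_UNIV_nat by blast

lemma fresh_notin: "finite A \<Longrightarrow> fresh A \<notin> A"
  unfolding fresh_def by (metis LeastI ex_fresh)

lemma rn_swap_comm: "inj f \<Longrightarrow> rn f (rn (swap a b) p) = rn (swap (f a) (f b)) (rn f p)"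
  by (simp add: comp_def swap_inj_comm)

lemma rs_swap_comm: "inj f \<Longrightarrow> rs f (rs (swap a b) p) = rs (swap (f a) (f b)) (rs f p)"
  by (simp add: comp_def swap_inj_comm)

lemma abs_eq_form_iff:
  "abs_eq_form a p b q \<longleftrightarrow> (b = a \<and> q = p) \<or> (b \<noteq> a \<and> b \<notin> names_form p \<and> q = rn (swap a b) p)"
proof
  assume "abs_eq_form a p b q"
  then obtain c where c: "c \<notin> {a, b} \<union> names_form p \<union> names_form q"
    and e: "rn (swap a c) p = rn (swap b c) q"
    by (auto simp: abs_eq_form_def perm_form_rn)
  have q: "q = rn (swap b c \<circ> swap a c) p"
    using arg_cong[OF e, of "rn (swap b c)"] by (simp add: comp_def)
  show "(b = a \<and> q = p) \<or> (b \<noteq> a \<and> b \<notin> names_form p \<and> q = rn (swap a b) p)"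
  proof (cases "b = a")
    case True then show ?thesis using q by (simp add: comp_def)
  next
    case False
    have "b \<notin> names_form p"
    proof
      assume "b \<in> names_form p"
      then have "swap b c (swap a c b) \<in> names_form q" using q by auto
      then show False using c False by auto
    qed
    moreover have "q = rn (swap a b) p"
      unfolding q using c \<open>b \<notin> names_form p\<close>
      by (intro rn_cong) (auto simp: swap_def)
    ultimately show ?thesis using False by auto
  qed
next
  assume h: "(b = a \<and> q = p) \<or> (b \<noteq> a \<and> b \<notin> names_form p \<and> q = rn (swap a b) p)"
  obtain c where c: "c \<notin> {a, b} \<union> names_form p \<union> names_form q"
    using ex_fresh[of "{a, b} \<union> names_form p \<union> names_form q"] by auto
  have "rn (swap a c) p = rn (swap b c) q"
    using h c by (auto simp: comp_def intro!: rn_cong) (auto simp: swap_def)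
  then show "abs_eq_form a p b q" using c by (auto simp: abs_eq_form_def perm_form_rn)
qed

lemma abs_eq_str_iff:
  "abs_eq_str a p b q \<longleftrightarrow> (b = a \<and> q = p) \<or> (b \<noteq> a \<and> b \<notin> names_str p \<and> q = rs (swap a b) p)"
proof
  assume "abs_eq_str a p b q"
  then obtain c where c: "c \<notin> {a, b} \<union> names_str p \<union> names_str q"
    and e: "rs (swap a c) p = rs (swap b c) q"
    by (auto simp: abs_eq_str_def perm_str_rs)
  have q: "q = rs (swap b c \<circ> swap a c) p"
    using arg_cong[OF e, of "rs (swap b c)"] by (simp add: comp_def)
  show "(b = a \<and> q = p) \<or> (b \<noteq> a \<and> b \<notin> names_str p \<and> q = rs (swap a b) p)"
  proof (cases "b = a")
    case True then show ?thesis using q by (simp add: comp_def)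
  next
    case False
    have "b \<notin> names_str p"
    proof
      assume "b \<in> names_str p"
      then have "swap b c (swap a c b) \<in> names_str q" using q by auto
      then show False using c False by auto
    qed
    moreover have "q = rs (swap a b) p"
      unfolding q using c \<open>b \<notin> names_str p\<close>
      by (intro rs_cong) (auto simp: swap_def)
    ultimately show ?thesis using False by auto
  qed
next
  assume h: "(b = a \<and> q = p) \<or> (b \<noteq> a \<and> b \<notin> names_str p \<and> q = rs (swap a b) p)"
  obtain c where c: "c \<notin> {a, b} \<union> names_str p \<union> names_str q"
    using ex_fresh[of "{a, b} \<union> names_str p \<union> names_str q"] by auto
  have "rs (swap a c) p = rs (swap b c) q"
    using h c by (auto simp: comp_def intro!: rs_cong) (auto simp: swap_def)
  then show "abs_eq_str a p b q" using c by (auto simp: abs_eq_str_def perm_str_rs)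
qed



lemma swap_comp_comm: "inj f \<Longrightarrow> f \<circ> swap a b = swap (f a) (f b) \<circ> f"
  by (rule ext) (simp add: swap_inj_comm)

lemma swap_self[simp]: "swap a a = id"
  by (rule ext) (simp add: swap_def)


lemma rs_append[simp]: "rs f (u @ w) = rs f u @ rs f w"
  by (simp add: rs_def)

lemma free_occ_Nil[simp]: "\<not> free_occ [] i x"
  by (simp add: free_occ_def)

lemma free_occ_Pl0[simp]: "free_occ (Pl b # w) 0 y \<longleftrightarrow> y = b"
  by (auto simp: free_occ_def)

lemma free_occ_PlS[simp]: "free_occ (Pl b # w) (Suc i) y \<longleftrightarrow> free_occ w i y"
  by (auto simp: free_occ_def)

lemma free_occ_Br0[simp]: "\<not> free_occ (Br b # w) 0 y"
  by (auto simp: free_occ_def)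

lemma free_occ_BrS[simp]: "free_occ (Br b # w) (Suc i) y \<longleftrightarrow> free_occ w i y \<and> y \<noteq> b"
  by (auto simp: free_occ_def)

lemma free_occ_names: "free_occ w i x \<Longrightarrow> x \<in> names_str w"
  unfolding free_occ_def names_str_def
  by (metis name_of.simps(1) nth_mem rev_image_eqI)

lemma free_occ_Cons: "free_occ (l # w) i y \<longleftrightarrow>
   (case l of Pl b \<Rightarrow> (i = 0 \<and> y = b) \<or> (i > 0 \<and> free_occ w (i - 1) y)
    | Br b \<Rightarrow> i > 0 \<and> free_occ w (i - 1) y \<and> y \<noteq> b)"
  by (cases l; cases i) auto

lemma free_occ_rs: "inj f \<Longrightarrow> free_occ (rs f w) i (f x) \<longleftrightarrow> free_occ w i x"
proof (induction w arbitrary: i)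
  case (Cons l w) then show ?case by (cases l; cases i) (auto simp: inj_eq)
qed auto

lemma free_occ_append: "free_occ (u @ w) i x \<longleftrightarrow>
   (i < length u \<and> free_occ u i x) \<or> (i \<ge> length u \<and> Br x \<notin> set u \<and> free_occ w (i - length u) x)"
proof (induction u arbitrary: i)
  case (Cons l u)
  show ?case
  proof (cases l)
    case (Pl b) then show ?thesis using Cons by (cases i) auto
  next
    case (Br b) then show ?thesis using Cons by (cases i) auto
  qed
qed auto

lemma alpha_len: "alpha w u \<Longrightarrow> length w = length u"
  by (induction rule: alpha.induct) (auto simp: abs_eq_str_iff)

fun knd :: "bstr \<Rightarrow> bl option" where
  "knd [] = None" | "knd (Pl x # _) = Some (Pl x)" | "knd (Br x # _) = Some (Br 0)"

lemma alpha_knd: "alpha w u \<Longrightarrow> knd w = knd u"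
proof (induction rule: alpha.induct)
  case (alpha_base a v b u w)
  then show ?case by (cases w; cases "hd w") auto
qed auto

lemma alpha_Br_shape: "alpha w (Br b # v) \<Longrightarrow> \<exists>e w'. w = Br e # w'"
  using alpha_knd[of w "Br b # v"] by (cases w rule: knd.cases) auto

lemma alpha_rs: "alpha w u \<Longrightarrow> inj f \<Longrightarrow> alpha (rs f w) (rs f u)"
proof (induction rule: alpha.induct)
  case (alpha_base a v b u w)
  have "abs_eq_str (f a) (rs f v) (f b) (rs f u)"
    using alpha_base by (auto simp: abs_eq_str_iff inj_eq swap_comp_comm)
  then show ?case using alpha.alpha_base by simp
qed (auto intro: alpha.intros)

lemma alpha_head: "d \<notin> names_str v \<Longrightarrow> alpha (Br b # v) (Br d # rs (swap b d) v)"
proof (cases "d = b")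
  case True then show ?thesis by (simp add: alpha_refl)
next
  case False
  assume "d \<notin> names_str v"
  then show ?thesis using False alpha_base[of b v d "rs (swap b d) v" "[]"] by (auto simp: abs_eq_str_iff)
qed

lemma free_occ_swap_tail:
  assumes "a \<noteq> b" "b \<notin> names_str v"
  shows "(free_occ v j x \<and> x \<noteq> a) \<longleftrightarrow> (free_occ (rs (swap a b) v) j x \<and> x \<noteq> b)"
proof -
  consider "x = a" | "x = b" | "x \<noteq> a" "x \<noteq> b" by blast
  then show ?thesis
  proof cases
    case 1
    have "free_occ (rs (swap a b) v) j a \<longleftrightarrow> free_occ v j b"
      using free_occ_rs[of "swap a b" v j b] by simp
    then show ?thesis using 1 assms free_occ_names by blast
  next
    case 2 then show ?thesis using assms free_occ_names by blast
  next
    case 3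
    then show ?thesis using free_occ_rs[of "swap a b" v j x] by simp
  qed
qed

lemma alpha_free_occ: "alpha w u \<Longrightarrow> free_occ w i x \<longleftrightarrow> free_occ u i x"
proof (induction arbitrary: i rule: alpha.induct)
  case (alpha_base a v b u w)
  show ?case
  proof (cases "b = a")
    case True then show ?thesis using alpha_base by (auto simp: abs_eq_str_iff)
  next
    case False
    then have u: "u = rs (swap a b) v" and bv: "b \<notin> names_str v"
      using alpha_base by (auto simp: abs_eq_str_iff)
    have e: "\<And>j. (free_occ v j x \<and> x \<noteq> a) \<longleftrightarrow> (free_occ u j x \<and> x \<noteq> b)"
      using free_occ_swap_tail[OF False[symmetric] bv] u by simp
    show ?thesis
      unfolding free_occ_append free_occ_Cons
      using e by (auto split: nat.splits)
  qed
qed auto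



inductive aeq :: "form \<Rightarrow> form \<Rightarrow> bool" where
  aeq_Eps: "aeq Eps Eps"
| aeq_NEps: "aeq NEps NEps"
| aeq_Var: "aeq (Var X) (Var X)"
| aeq_And: "aeq p p' \<Longrightarrow> aeq q q' \<Longrightarrow> aeq (And p q) (And p' q')"
| aeq_Or: "aeq p p' \<Longrightarrow> aeq q q' \<Longrightarrow> aeq (Or p q) (Or p' q')"
| aeq_DiaPl: "aeq p q \<Longrightarrow> aeq (Dia (Pl x) p) (Dia (Pl x) q)"
| aeq_BoxPl: "aeq p q \<Longrightarrow> aeq (Box (Pl x) p) (Box (Pl x) q)"
| aeq_Mu: "aeq p q \<Longrightarrow> aeq (Mu X p) (Mu X q)"
| aeq_DiaBr: "c \<notin> {a, b} \<union> names_form p \<union> names_form q \<Longrightarrow> aeq (rn (swap a c) p) (rn (swap b c) q)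
     \<Longrightarrow> aeq (Dia (Br a) p) (Dia (Br b) q)"
| aeq_BoxBr: "c \<notin> {a, b} \<union> names_form p \<union> names_form q \<Longrightarrow> aeq (rn (swap a c) p) (rn (swap b c) q)
     \<Longrightarrow> aeq (Box (Br a) p) (Box (Br b) q)"

lemma aeq_rn: "aeq p q \<Longrightarrow> inj f \<Longrightarrow> aeq (rn f p) (rn f q)"
proof (induction rule: aeq.induct)
  case (aeq_DiaBr c a b p q)
  have "aeq (rn (f \<circ> swap a c) p) (rn (f \<circ> swap b c) q)" using aeq_DiaBr by simp
  then have "aeq (rn (swap (f a) (f c)) (rn f p)) (rn (swap (f b) (f c)) (rn f q))"
    by (simp add: swap_comp_comm[OF aeq_DiaBr.prems])
  moreover have "f c \<notin> {f a, f b} \<union> names_form (rn f p) \<union> names_form (rn f q)"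
    using aeq_DiaBr by (auto simp: inj_eq)
  ultimately show ?case by (simp add: aeq.aeq_DiaBr)
next
  case (aeq_BoxBr c a b p q)
  have "aeq (rn (f \<circ> swap a c) p) (rn (f \<circ> swap b c) q)" using aeq_BoxBr by simp
  then have "aeq (rn (swap (f a) (f c)) (rn f p)) (rn (swap (f b) (f c)) (rn f q))"
    by (simp add: swap_comp_comm[OF aeq_BoxBr.prems])
  moreover have "f c \<notin> {f a, f b} \<union> names_form (rn f p) \<union> names_form (rn f q)"
    using aeq_BoxBr by (auto simp: inj_eq)
  ultimately show ?case by (simp add: aeq.aeq_BoxBr)
qed (auto intro: aeq.intros)

lemma aeq_refl_rn: "aeq (rn f p) (rn f p)"
proof (induction p arbitrary: f)
  case (Dia l p)
  show ?case
  proof (cases l)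
    case (Pl x) then show ?thesis using Dia by (simp add: aeq_DiaPl)
  next
    case (Br a)
    obtain c where c: "c \<notin> {f a} \<union> names_form (rn f p)"
      using ex_fresh[of "{f a} \<union> names_form (rn f p)"] by auto
    have "aeq (rn (swap (f a) c) (rn f p)) (rn (swap (f a) c) (rn f p))" using Dia by simp
    then show ?thesis using c Br by (simp add: aeq_DiaBr del: rn_comp)
  qed
next
  case (Box l p)
  show ?case
  proof (cases l)
    case (Pl x) then show ?thesis using Box by (simp add: aeq_BoxPl)
  next
    case (Br a)
    obtain c where c: "c \<notin> {f a} \<union> names_form (rn f p)"
      using ex_fresh[of "{f a} \<union> names_form (rn f p)"] by auto
    have "aeq (rn (swap (f a) c) (rn f p)) (rn (swap (f a) c) (rn f p))" using Box by simp
    then show ?thesis using c Br by (simp add: aeq_BoxBr del: rn_comp)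
  qed
qed (auto intro: aeq.intros)

lemma aeq_refl[simp, intro]: "aeq p p"
  using aeq_refl_rn[of id p] by simp

lemma aeq_sym: "aeq p q \<Longrightarrow> aeq q p"
  by (induction rule: aeq.induct) (auto intro: aeq.intros)

lemma fresh_swap_eq:
  "c \<notin> insert a (names_form p) \<Longrightarrow> d \<notin> insert a (names_form p) \<Longrightarrow>
   rn (swap c d \<circ> swap a c) p = rn (swap a d) p"
  by (intro rn_cong) (auto simp: swap_def)

lemma aeq_fresh_Dia:
  assumes "aeq (Dia (Br a) p) (Dia (Br b) q)" "d \<notin> {a, b} \<union> names_form p \<union> names_form q"
  shows "aeq (rn (swap a d) p) (rn (swap b d) q)"
proof -
  from assms(1) obtain c where c: "c \<notin> {a, b} \<union> names_form p \<union> names_form q"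
    and h: "aeq (rn (swap a c) p) (rn (swap b c) q)"
    by (cases rule: aeq.cases) auto
  have "aeq (rn (swap c d) (rn (swap a c) p)) (rn (swap c d) (rn (swap b c) q))"
    using aeq_rn[OF h] by simp
  then show ?thesis using c assms(2) by (simp add: fresh_swap_eq del: rn_comp, simp add: fresh_swap_eq)
qed

lemma aeq_fresh_Box:
  assumes "aeq (Box (Br a) p) (Box (Br b) q)" "d \<notin> {a, b} \<union> names_form p \<union> names_form q"
  shows "aeq (rn (swap a d) p) (rn (swap b d) q)"
proof -
  from assms(1) obtain c where c: "c \<notin> {a, b} \<union> names_form p \<union> names_form q"
    and h: "aeq (rn (swap a c) p) (rn (swap b c) q)"
    by (cases rule: aeq.cases) auto
  have "aeq (rn (swap c d) (rn (swap a c) p)) (rn (swap c d) (rn (swap b c) q))"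
    using aeq_rn[OF h] by simp
  then show ?thesis using c assms(2) by (simp add: fresh_swap_eq del: rn_comp, simp add: fresh_swap_eq)
qed

inductive_cases aeqE_Eps: "aeq Eps q"
inductive_cases aeqE_NEps: "aeq NEps q"
inductive_cases aeqE_Var: "aeq (Var X) q"
inductive_cases aeqE_And: "aeq (And p1 p2) q"
inductive_cases aeqE_Or: "aeq (Or p1 p2) q"
inductive_cases aeqE_DiaPl: "aeq (Dia (Pl x) p) q"
inductive_cases aeqE_BoxPl: "aeq (Box (Pl x) p) q"
inductive_cases aeqE_Mu: "aeq (Mu X p) q"
inductive_cases aeqE_DiaBr: "aeq (Dia (Br x) p) q"
inductive_cases aeqE_BoxBr: "aeq (Box (Br x) p) q"

lemma aeq_trans: "aeq p q \<Longrightarrow> aeq q r \<Longrightarrow> aeq p r"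
proof (induction "size p" arbitrary: p q r rule: less_induct)
  case less
  from less.prems(1) show ?case
  proof (cases rule: aeq.cases)
    case (aeq_And p1 p1' q1 q1')
    from less.prems(2) aeq_And obtain r1 r2 where r: "r = And r1 r2" "aeq p1' r1" "aeq q1' r2"
      by (auto elim: aeqE_And)
    have "aeq p1 r1" using less.hyps[of p1 p1' r1] aeq_And r by simp
    moreover have "aeq q1 r2" using less.hyps[of q1 q1' r2] aeq_And r by simp
    ultimately show ?thesis using aeq_And r by (simp add: aeq.aeq_And)
  next
    case (aeq_Or p1 p1' q1 q1')
    from less.prems(2) aeq_Or obtain r1 r2 where r: "r = Or r1 r2" "aeq p1' r1" "aeq q1' r2"
      by (auto elim: aeqE_Or)
    have "aeq p1 r1" using less.hyps[of p1 p1' r1] aeq_Or r by simp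
    moreover have "aeq q1 r2" using less.hyps[of q1 q1' r2] aeq_Or r by simp
    ultimately show ?thesis using aeq_Or r by (simp add: aeq.aeq_Or)
  next
    case (aeq_DiaPl p1 q1 x)
    from less.prems(2) aeq_DiaPl obtain r1 where r: "r = Dia (Pl x) r1" "aeq q1 r1"
      by (auto elim: aeqE_DiaPl)
    have "aeq p1 r1" using less.hyps[of p1 q1 r1] aeq_DiaPl r by simp
    then show ?thesis using aeq_DiaPl r by (simp add: aeq.aeq_DiaPl)
  next
    case (aeq_BoxPl p1 q1 x)
    from less.prems(2) aeq_BoxPl obtain r1 where r: "r = Box (Pl x) r1" "aeq q1 r1"
      by (auto elim: aeqE_BoxPl)
    have "aeq p1 r1" using less.hyps[of p1 q1 r1] aeq_BoxPl r by simp
    then show ?thesis using aeq_BoxPl r by (simp add: aeq.aeq_BoxPl)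
  next
    case (aeq_Mu p1 q1 X)
    from less.prems(2) aeq_Mu obtain r1 where r: "r = Mu X r1" "aeq q1 r1"
      by (auto elim: aeqE_Mu)
    have "aeq p1 r1" using less.hyps[of p1 q1 r1] aeq_Mu r by simp
    then show ?thesis using aeq_Mu r by (simp add: aeq.aeq_Mu)
  next
    case (aeq_DiaBr c a b p0 q0)
    from less.prems(2) aeq_DiaBr obtain e r0 where r: "r = Dia (Br e) r0"
      by (auto elim: aeqE_DiaBr)
    obtain d where d: "d \<notin> {a, b, e} \<union> names_form p0 \<union> names_form q0 \<union> names_form r0"
      using ex_fresh[of "{a, b, e} \<union> names_form p0 \<union> names_form q0 \<union> names_form r0"] by auto
    have 1: "aeq (rn (swap a d) p0) (rn (swap b d) q0)"
      using aeq_fresh_Dia[of a p0 b q0 d] less.prems(1) aeq_DiaBr d by auto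
    have 2: "aeq (rn (swap b d) q0) (rn (swap e d) r0)"
      using aeq_fresh_Dia[of b q0 e r0 d] less.prems(2) aeq_DiaBr r d by auto
    have "aeq (rn (swap a d) p0) (rn (swap e d) r0)"
      using less.hyps[OF _ 1 2] aeq_DiaBr by simp
    then show ?thesis using aeq_DiaBr r d by (auto intro!: aeq.aeq_DiaBr[of d])
  next
    case (aeq_BoxBr c a b p0 q0)
    from less.prems(2) aeq_BoxBr obtain e r0 where r: "r = Box (Br e) r0"
      by (auto elim: aeqE_BoxBr)
    obtain d where d: "d \<notin> {a, b, e} \<union> names_form p0 \<union> names_form q0 \<union> names_form r0"
      using ex_fresh[of "{a, b, e} \<union> names_form p0 \<union> names_form q0 \<union> names_form r0"] by auto
    have 1: "aeq (rn (swap a d) p0) (rn (swap b d) q0)"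
      using aeq_fresh_Box[of a p0 b q0 d] less.prems(1) aeq_BoxBr d by auto
    have 2: "aeq (rn (swap b d) q0) (rn (swap e d) r0)"
      using aeq_fresh_Box[of b q0 e r0 d] less.prems(2) aeq_BoxBr r d by auto
    have "aeq (rn (swap a d) p0) (rn (swap e d) r0)"
      using less.hyps[OF _ 1 2] aeq_BoxBr by simp
    then show ?thesis using aeq_BoxBr r d by (auto intro!: aeq.aeq_BoxBr[of d])
  qed (use less.prems in \<open>auto elim: aeq.cases\<close>)
qed

lemma aeq_DiaBr_cong: "aeq p q \<Longrightarrow> aeq (Dia (Br a) p) (Dia (Br a) q)"
proof -
  assume h: "aeq p q"
  obtain c where c: "c \<notin> {a} \<union> names_form p \<union> names_form q"
    using ex_fresh[of "{a} \<union> names_form p \<union> names_form q"] by auto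
  show ?thesis using c aeq_rn[OF h, of "swap a c"] by (auto intro!: aeq_DiaBr[of c])
qed

lemma aeq_BoxBr_cong: "aeq p q \<Longrightarrow> aeq (Box (Br a) p) (Box (Br a) q)"
proof -
  assume h: "aeq p q"
  obtain c where c: "c \<notin> {a} \<union> names_form p \<union> names_form q"
    using ex_fresh[of "{a} \<union> names_form p \<union> names_form q"] by auto
  show ?thesis using c aeq_rn[OF h, of "swap a c"] by (auto intro!: aeq_BoxBr[of c])
qed

lemma aeq_rename_Dia: "c = b \<or> c \<notin> names_form p \<Longrightarrow> aeq (Dia (Br b) p) (Dia (Br c) (rn (swap b c) p))"
proof -
  assume h: "c = b \<or> c \<notin> names_form p"
  obtain d where d: "d \<notin> {b, c} \<union> names_form p"
    using ex_fresh[of "{b, c} \<union> names_form p"] by auto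
  have "rn (swap b d) p = rn (swap c d \<circ> swap b c) p"
    using h d by (intro rn_cong) (auto simp: swap_def)
  then show ?thesis using d h by (intro aeq_DiaBr[of d]) (auto simp: swap_def)
qed

lemma aeq_rename_Box: "c = b \<or> c \<notin> names_form p \<Longrightarrow> aeq (Box (Br b) p) (Box (Br c) (rn (swap b c) p))"
proof -
  assume h: "c = b \<or> c \<notin> names_form p"
  obtain d where d: "d \<notin> {b, c} \<union> names_form p"
    using ex_fresh[of "{b, c} \<union> names_form p"] by auto
  have "rn (swap b d) p = rn (swap c d \<circ> swap b c) p"
    using h d by (intro rn_cong) (auto simp: swap_def)
  then show ?thesis using d h by (intro aeq_BoxBr[of d]) (auto simp: swap_def)
qed



lemma FN_swap_fresh: "c \<notin> names_form p \<Longrightarrow> FN (rn (swap b c) p) - {c} = FN p - {b}"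
  using FN_sub_names[of p] by (auto simp: FN_rn swap_def)

lemma fresh_subst: "fresh (insert b (names_form p \<union> names_form t)) \<notin> insert b (names_form p \<union> names_form t)"
  by (rule fresh_notin) simp

lemma FN_subst: "FN (subst t X p) \<subseteq> FN p \<union> FN t"
proof (induction t X p rule: subst.induct)
  case (7 t X b p)
  show ?case
  proof (cases "b \<in> FN t")
    case True
    define c where "c = fresh (insert b (names_form p \<union> names_form t))"
    have c: "c \<notin> insert b (names_form p \<union> names_form t)" unfolding c_def by (rule fresh_subst)
    have IH: "FN (subst t X (perm_form b c p)) \<subseteq> FN (perm_form b c p) \<union> FN t"
      using 7 True c_def by simp
    have "FN (subst t X (Dia (Br b) p)) = FN (subst t X (perm_form b c p)) - {c}"
      using True by (simp add: Let_def c_def)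
    then show ?thesis using IH FN_swap_fresh[of c p b] c by (auto simp: perm_form_rn)
  next
    case False then show ?thesis using 7 by auto
  qed
next
  case (8 t X b p)
  show ?case
  proof (cases "b \<in> FN t")
    case True
    define c where "c = fresh (insert b (names_form p \<union> names_form t))"
    have c: "c \<notin> insert b (names_form p \<union> names_form t)" unfolding c_def by (rule fresh_subst)
    have IH: "FN (subst t X (perm_form b c p)) \<subseteq> FN (perm_form b c p) \<union> FN t"
      using 8 True c_def by simp
    have "FN (subst t X (Box (Br b) p)) = FN (subst t X (perm_form b c p)) - {c}"
      using True by (simp add: Let_def c_def)
    then show ?thesis using IH FN_swap_fresh[of c p b] c by (auto simp: perm_form_rn)
  next
    case False then show ?thesis using 8 by auto
  qed
qed auto

lemma fv_subst: "fv t = {} \<Longrightarrow> fv (subst t X p) \<subseteq> fv p - {X}"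
  by (induction t X p rule: subst.induct) (auto simp: Let_def perm_form_rn)

lemma unguarded_fv: "unguarded Y t \<Longrightarrow> Y \<in> fv t"
  by (induction t) auto

lemma unguarded_subst: "unguarded Y (subst t X p) \<Longrightarrow> unguarded Y p \<or> Y \<in> fv t"
  by (induction t X p rule: subst.induct) (auto simp: Let_def unguarded_fv split: if_splits)

lemma guarded_subst: "guarded p \<Longrightarrow> guarded t \<Longrightarrow> fv t = {} \<Longrightarrow> guarded (subst t X p)"
  by (induction t X p rule: subst.induct) (auto simp: Let_def perm_form_rn dest: unguarded_subst)

lemma subst_Br_shape:
  "\<exists>a1 p1. subst t X (Dia (Br a) p) = Dia (Br a1) (subst t X p1) \<and>
           subst t X (Box (Br a) p) = Box (Br a1) (subst t X p1) \<and> a1 \<notin> FN t \<and>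
     ((a1 = a \<and> p1 = p) \<or> (a1 \<noteq> a \<and> a1 \<notin> names_form p \<and> a1 \<notin> names_form t \<and> p1 = rn (swap a a1) p))"
proof (cases "a \<in> FN t")
  case True
  define c where "c = fresh (insert a (names_form p \<union> names_form t))"
  have c: "c \<notin> insert a (names_form p \<union> names_form t)" unfolding c_def by (rule fresh_subst)
  then have "c \<notin> FN t" using FN_sub_names by blast
  moreover have "subst t X (Dia (Br a) p) = Dia (Br c) (subst t X (rn (swap a c) p))"
    "subst t X (Box (Br a) p) = Box (Br c) (subst t X (rn (swap a c) p))"
    using True by (simp_all add: Let_def c_def perm_form_rn)
  ultimately show ?thesis using c by blast
next
  case False then show ?thesis by auto
qed

lemma swap_FN_aeq: "x \<notin> FN t \<Longrightarrow> y \<notin> FN t \<Longrightarrow> aeq (rn (swap x y) t) t"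
proof (induction "size t" arbitrary: t rule: less_induct)
  case less
  show ?case
  proof (cases t)
    case (And p q) then show ?thesis using less by (auto intro!: aeq_And)
  next
    case (Or p q) then show ?thesis using less by (auto intro!: aeq_Or)
  next
    case (Mu Z p) then show ?thesis using less by (auto intro!: aeq_Mu)
  next
    case (Dia l t0)
    show ?thesis
    proof (cases l)
      case (Pl z) then show ?thesis using less Dia by (auto intro!: aeq_DiaPl)
    next
      case (Br e)
      let ?sw = "swap x y"
      obtain d where d: "d \<notin> {x, y, e} \<union> names_form t0"
        using ex_fresh[of "{x, y, e} \<union> names_form t0"] by auto
      have dsw: "?sw d = d" using d by auto
      have comm: "swap (?sw e) d \<circ> ?sw = ?sw \<circ> swap e d"
        using swap_comp_comm[of ?sw e d] dsw by simp
      have fx: "x \<notin> FN (rn (swap e d) t0)" "y \<notin> FN (rn (swap e d) t0)"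
        using less.prems Dia Br d FN_sub_names[of t0] by (auto simp: FN_rn swap_def)
      have "aeq (rn ?sw (rn (swap e d) t0)) (rn (swap e d) t0)"
        using less.hyps[OF _ fx] Dia by simp
      then have "aeq (rn (swap (?sw e) d) (rn ?sw t0)) (rn (swap e d) t0)"
        by (simp add: comm)
      moreover have "d \<notin> {?sw e, e} \<union> names_form (rn ?sw t0) \<union> names_form t0"
        using d by (auto simp: swap_def split: if_splits)
      ultimately show ?thesis using Dia Br by (auto intro: aeq_DiaBr)
    qed
  next
    case (Box l t0)
    show ?thesis
    proof (cases l)
      case (Pl z) then show ?thesis using less Box by (auto intro!: aeq_BoxPl)
    next
      case (Br e)
      let ?sw = "swap x y"
      obtain d where d: "d \<notin> {x, y, e} \<union> names_form t0"
        using ex_fresh[of "{x, y, e} \<union> names_form t0"] by auto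
      have dsw: "?sw d = d" using d by auto
      have comm: "swap (?sw e) d \<circ> ?sw = ?sw \<circ> swap e d"
        using swap_comp_comm[of ?sw e d] dsw by simp
      have fx: "x \<notin> FN (rn (swap e d) t0)" "y \<notin> FN (rn (swap e d) t0)"
        using less.prems Box Br d FN_sub_names[of t0] by (auto simp: FN_rn swap_def)
      have "aeq (rn ?sw (rn (swap e d) t0)) (rn (swap e d) t0)"
        using less.hyps[OF _ fx] Box by simp
      then have "aeq (rn (swap (?sw e) d) (rn ?sw t0)) (rn (swap e d) t0)"
        by (simp add: comm)
      moreover have "d \<notin> {?sw e, e} \<union> names_form (rn ?sw t0) \<union> names_form t0"
        using d by (auto simp: swap_def split: if_splits)
      ultimately show ?thesis using Box Br by (auto intro: aeq_BoxBr)
    qed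
  qed auto
qed



lemma subst_rn: "inj f \<Longrightarrow> aeq (rn f (subst t X p)) (subst (rn f t) X (rn f p))"
proof (induction "size p" arbitrary: p f t rule: less_induct)
  case less
  show ?case
  proof (cases p)
    case (And p1 p2) then show ?thesis using less by (auto intro!: aeq_And)
  next
    case (Or p1 p2) then show ?thesis using less by (auto intro!: aeq_Or)
  next
    case (Mu Y q) then show ?thesis using less by (auto intro!: aeq_Mu)
  next
    case (Dia l q)
    note K = Dia
    show ?thesis
    proof (cases l)
      case (Pl z) then show ?thesis using less Dia by (auto intro!: aeq_DiaPl)
    next
    case (Br b)
    show ?thesis
    proof (cases "b \<in> FN t")
      case True
      have fb: "f b \<in> FN (rn f t)" using True less.prems by (simp add: FN_rn)
      define c where "c = fresh (insert b (names_form q \<union> names_form t))"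
      define c' where "c' = fresh (insert (f b) (names_form (rn f q) \<union> names_form (rn f t)))"
      have c: "c \<notin> insert b (names_form q \<union> names_form t)" unfolding c_def by (rule fresh_subst)
      have c': "c' \<notin> insert (f b) (names_form (rn f q) \<union> names_form (rn f t))" unfolding c'_def by (rule fresh_subst)
      define P1 where "P1 = rn (swap b c) q"
      define P2 where "P2 = rn (swap (f b) c') (rn f q)"
      have L: "subst t X (Dia (Br b) q) = Dia (Br c) (subst t X P1)"
        using True by (simp add: Let_def c_def P1_def perm_form_rn)
      have R: "subst (rn f t) X (Dia (Br (f b)) (rn f q)) = Dia (Br c') (subst (rn f t) X P2)"
        using fb by (simp add: Let_def c'_def P2_def perm_form_rn del: rn_comp)
      obtain d where d: "d \<notin> {f c, c', f b} \<union> f ` names_form q \<union> f ` names_form t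
          \<union> names_form (rn f (subst t X P1)) \<union> names_form (subst (rn f t) X P2)"
        using ex_fresh[of "{f c, c', f b} \<union> f ` names_form q \<union> f ` names_form t
          \<union> names_form (rn f (subst t X P1)) \<union> names_form (subst (rn f t) X P2)"] by auto
      have sz1: "size P1 < size p" and sz2: "size P2 < size p" using Dia by (simp_all add: P1_def P2_def)
      define g where "g = swap (f c) d \<circ> f"
      define h where "h = swap c' d"
      have ig: "inj g" unfolding g_def using less.prems by (simp add: inj_compose)
      have IH1: "aeq (rn g (subst t X P1)) (subst (rn g t) X (rn g P1))"
        using less.hyps[OF sz1 ig] .
      have IH2: "aeq (rn h (subst (rn f t) X P2)) (subst (rn h (rn f t)) X (rn h P2))"
        unfolding h_def by (rule less.hyps[OF sz2 inj_swap])
      have E1: "rn g t = rn f t"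
        unfolding g_def using c d less.prems by (intro rn_cong) (auto simp: swap_def inj_eq)
      have E2: "rn h (rn f t) = rn f t"
      proof -
        have "rn h (rn f t) = rn id (rn f t)"
          unfolding h_def using c' d by (intro rn_cong) (auto simp: swap_def)
        then show ?thesis by simp
      qed
      have E3: "rn g P1 = rn h P2"
        unfolding g_def h_def P1_def P2_def using c c' d less.prems
        by (simp, intro rn_cong) (auto simp: swap_def inj_eq)
      have "aeq (rn g (subst t X P1)) (rn h (subst (rn f t) X P2))"
        using aeq_trans[OF IH1[unfolded E1 E3] aeq_sym[OF IH2[unfolded E2]]] .
      then have "aeq (rn (swap (f c) d) (rn f (subst t X P1))) (rn (swap c' d) (subst (rn f t) X P2))"
        by (simp add: g_def h_def)
      moreover have "d \<notin> {f c, c'} \<union> names_form (rn f (subst t X P1)) \<union> names_form (subst (rn f t) X P2)"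
        using d by blast
      ultimately have "aeq (Dia (Br (f c)) (rn f (subst t X P1))) (Dia (Br c') (subst (rn f t) X P2))"
        by (intro aeq_DiaBr[of d]) auto
      then show ?thesis unfolding Dia Br rn.simps rnb.simps L R by simp
    next
      case False
      have fb: "f b \<notin> FN (rn f t)" using False less.prems by (auto simp: FN_rn inj_eq)
      have "aeq (rn f (subst t X q)) (subst (rn f t) X (rn f q))"
        using less.hyps[of q f t] less.prems Dia by simp
      then show ?thesis using False fb unfolding Dia Br by (simp add: aeq_DiaBr_cong)
    qed
    qed
  next
    case (Box l q)
    note K = Box
    show ?thesis
    proof (cases l)
      case (Pl z) then show ?thesis using less Box by (auto intro!: aeq_BoxPl)
    next
    case (Br b)
    show ?thesis
    proof (cases "b \<in> FN t")
      case True
      have fb: "f b \<in> FN (rn f t)" using True less.prems by (simp add: FN_rn)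
      define c where "c = fresh (insert b (names_form q \<union> names_form t))"
      define c' where "c' = fresh (insert (f b) (names_form (rn f q) \<union> names_form (rn f t)))"
      have c: "c \<notin> insert b (names_form q \<union> names_form t)" unfolding c_def by (rule fresh_subst)
      have c': "c' \<notin> insert (f b) (names_form (rn f q) \<union> names_form (rn f t))" unfolding c'_def by (rule fresh_subst)
      define P1 where "P1 = rn (swap b c) q"
      define P2 where "P2 = rn (swap (f b) c') (rn f q)"
      have L: "subst t X (Box (Br b) q) = Box (Br c) (subst t X P1)"
        using True by (simp add: Let_def c_def P1_def perm_form_rn)
      have R: "subst (rn f t) X (Box (Br (f b)) (rn f q)) = Box (Br c') (subst (rn f t) X P2)"
        using fb by (simp add: Let_def c'_def P2_def perm_form_rn del: rn_comp)
      obtain d where d: "d \<notin> {f c, c', f b} \<union> f ` names_form q \<union> f ` names_form t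
          \<union> names_form (rn f (subst t X P1)) \<union> names_form (subst (rn f t) X P2)"
        using ex_fresh[of "{f c, c', f b} \<union> f ` names_form q \<union> f ` names_form t
          \<union> names_form (rn f (subst t X P1)) \<union> names_form (subst (rn f t) X P2)"] by auto
      have sz1: "size P1 < size p" and sz2: "size P2 < size p" using Box by (simp_all add: P1_def P2_def)
      define g where "g = swap (f c) d \<circ> f"
      define h where "h = swap c' d"
      have ig: "inj g" unfolding g_def using less.prems by (simp add: inj_compose)
      have IH1: "aeq (rn g (subst t X P1)) (subst (rn g t) X (rn g P1))"
        using less.hyps[OF sz1 ig] .
      have IH2: "aeq (rn h (subst (rn f t) X P2)) (subst (rn h (rn f t)) X (rn h P2))"
        unfolding h_def by (rule less.hyps[OF sz2 inj_swap])
      have E1: "rn g t = rn f t"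
        unfolding g_def using c d less.prems by (intro rn_cong) (auto simp: swap_def inj_eq)
      have E2: "rn h (rn f t) = rn f t"
      proof -
        have "rn h (rn f t) = rn id (rn f t)"
          unfolding h_def using c' d by (intro rn_cong) (auto simp: swap_def)
        then show ?thesis by simp
      qed
      have E3: "rn g P1 = rn h P2"
        unfolding g_def h_def P1_def P2_def using c c' d less.prems
        by (simp, intro rn_cong) (auto simp: swap_def inj_eq)
      have "aeq (rn g (subst t X P1)) (rn h (subst (rn f t) X P2))"
        using aeq_trans[OF IH1[unfolded E1 E3] aeq_sym[OF IH2[unfolded E2]]] .
      then have "aeq (rn (swap (f c) d) (rn f (subst t X P1))) (rn (swap c' d) (subst (rn f t) X P2))"
        by (simp add: g_def h_def)
      moreover have "d \<notin> {f c, c'} \<union> names_form (rn f (subst t X P1)) \<union> names_form (subst (rn f t) X P2)"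
        using d by blast
      ultimately have "aeq (Box (Br (f c)) (rn f (subst t X P1))) (Box (Br c') (subst (rn f t) X P2))"
        by (intro aeq_BoxBr[of d]) auto
      then show ?thesis unfolding Box Br rn.simps rnb.simps L R by simp
    next
      case False
      have fb: "f b \<notin> FN (rn f t)" using False less.prems by (auto simp: FN_rn inj_eq)
      have "aeq (rn f (subst t X q)) (subst (rn f t) X (rn f q))"
        using less.hyps[of q f t] less.prems Box by simp
      then show ?thesis using False fb unfolding Box Br by (simp add: aeq_BoxBr_cong)
    qed
    qed
  qed auto
qed



lemma subst_aeq: "aeq p p' \<Longrightarrow> aeq t t' \<Longrightarrow> aeq (subst t X p) (subst t' X p')"
proof (induction "size p" arbitrary: p p' t t' rule: less_induct)
  case less
  from less.prems(1) show ?case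
  proof (cases rule: aeq.cases)
    case (aeq_And p1 p1' q1 q1')
    then show ?thesis using less.hyps[of p1 p1' t t'] less.hyps[of q1 q1' t t'] less.prems(2)
      by (auto intro!: aeq.aeq_And)
  next
    case (aeq_Or p1 p1' q1 q1')
    then show ?thesis using less.hyps[of p1 p1' t t'] less.hyps[of q1 q1' t t'] less.prems(2)
      by (auto intro!: aeq.aeq_Or)
  next
    case (aeq_DiaPl p1 q1 x)
    then show ?thesis using less.hyps[of p1 q1 t t'] less.prems(2) by (auto intro!: aeq.aeq_DiaPl)
  next
    case (aeq_BoxPl p1 q1 x)
    then show ?thesis using less.hyps[of p1 q1 t t'] less.prems(2) by (auto intro!: aeq.aeq_BoxPl)
  next
    case (aeq_Mu p1 q1 Y)
    then show ?thesis using less.hyps[of p1 q1 t t'] less.prems by (auto intro!: aeq.aeq_Mu)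
  next
    case (aeq_Var Y)
    then show ?thesis using less.prems by auto
  next
    case (aeq_DiaBr c a b p0 p0')
    obtain a1 P1 where A: "subst t X (Dia (Br a) p0) = Dia (Br a1) (subst t X P1)" "a1 \<notin> FN t"
      and A2: "(a1 = a \<and> P1 = p0) \<or> (a1 \<noteq> a \<and> a1 \<notin> names_form p0 \<and> a1 \<notin> names_form t \<and> P1 = rn (swap a a1) p0)"
      using subst_Br_shape[of t X a p0] by blast
    obtain b1 P1' where B: "subst t' X (Dia (Br b) p0') = Dia (Br b1) (subst t' X P1')" "b1 \<notin> FN t'"
      and B2: "(b1 = b \<and> P1' = p0') \<or> (b1 \<noteq> b \<and> b1 \<notin> names_form p0' \<and> b1 \<notin> names_form t' \<and> P1' = rn (swap b b1) p0')"
      using subst_Br_shape[of t' X b p0'] by blast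
    obtain d where d: "d \<notin> {a, b, a1, b1} \<union> names_form p0 \<union> names_form p0' \<union> names_form t \<union> names_form t'
       \<union> names_form (subst t X P1) \<union> names_form (subst t' X P1')"
      using ex_fresh[of "{a, b, a1, b1} \<union> names_form p0 \<union> names_form p0' \<union> names_form t \<union> names_form t'
       \<union> names_form (subst t X P1) \<union> names_form (subst t' X P1')"] by auto
    have S1: "aeq (rn (swap a1 d) (subst t X P1)) (subst (rn (swap a1 d) t) X (rn (swap a1 d) P1))"
      by (rule subst_rn) simp
    have S2: "aeq (rn (swap b1 d) (subst t' X P1')) (subst (rn (swap b1 d) t') X (rn (swap b1 d) P1'))"
      by (rule subst_rn) simp
    have E1: "rn (swap a1 d) P1 = rn (swap a d) p0"
      using A2
    proof
      assume h: "a1 \<noteq> a \<and> a1 \<notin> names_form p0 \<and> a1 \<notin> names_form t \<and> P1 = rn (swap a a1) p0"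
      then show ?thesis using d by (simp, intro rn_cong) (auto simp: swap_def)
    qed simp
    have E2: "rn (swap b1 d) P1' = rn (swap b d) p0'"
      using B2
    proof
      assume h: "b1 \<noteq> b \<and> b1 \<notin> names_form p0' \<and> b1 \<notin> names_form t' \<and> P1' = rn (swap b b1) p0'"
      then show ?thesis using d by (simp, intro rn_cong) (auto simp: swap_def)
    qed simp
    have T1: "aeq (rn (swap a1 d) t) t"
      using A(2) d FN_sub_names[of t] by (intro swap_FN_aeq) auto
    have T2: "aeq (rn (swap b1 d) t') t'"
      using B(2) d FN_sub_names[of t'] by (intro swap_FN_aeq) auto
    have Tt: "aeq (rn (swap a1 d) t) (rn (swap b1 d) t')"
      using aeq_trans[OF T1 aeq_trans[OF less.prems(2) aeq_sym[OF T2]]] .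
    have Pp: "aeq (rn (swap a d) p0) (rn (swap b d) p0')"
      using aeq_fresh_Dia[of a p0 b p0' d] less.prems(1) aeq_DiaBr d by auto
    have IH: "aeq (subst (rn (swap a1 d) t) X (rn (swap a d) p0)) (subst (rn (swap b1 d) t') X (rn (swap b d) p0'))"
      by (rule less.hyps[OF _ Pp Tt]) (simp add: aeq_DiaBr)
    have "aeq (rn (swap a1 d) (subst t X P1)) (rn (swap b1 d) (subst t' X P1'))"
      using aeq_trans[OF S1[unfolded E1] aeq_trans[OF IH aeq_sym[OF S2[unfolded E2]]]] .
    then have "aeq (Dia (Br a1) (subst t X P1)) (Dia (Br b1) (subst t' X P1'))"
      by (rule aeq.aeq_DiaBr[rotated]) (use d in auto)
    then show ?thesis using A B aeq_DiaBr by simp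
  next
    case (aeq_BoxBr c a b p0 p0')
    obtain a1 P1 where A: "subst t X (Box (Br a) p0) = Box (Br a1) (subst t X P1)" "a1 \<notin> FN t"
      and A2: "(a1 = a \<and> P1 = p0) \<or> (a1 \<noteq> a \<and> a1 \<notin> names_form p0 \<and> a1 \<notin> names_form t \<and> P1 = rn (swap a a1) p0)"
      using subst_Br_shape[of t X a p0] by blast
    obtain b1 P1' where B: "subst t' X (Box (Br b) p0') = Box (Br b1) (subst t' X P1')" "b1 \<notin> FN t'"
      and B2: "(b1 = b \<and> P1' = p0') \<or> (b1 \<noteq> b \<and> b1 \<notin> names_form p0' \<and> b1 \<notin> names_form t' \<and> P1' = rn (swap b b1) p0')"
      using subst_Br_shape[of t' X b p0'] by blast
    obtain d where d: "d \<notin> {a, b, a1, b1} \<union> names_form p0 \<union> names_form p0' \<union> names_form t \<union> names_form t'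
       \<union> names_form (subst t X P1) \<union> names_form (subst t' X P1')"
      using ex_fresh[of "{a, b, a1, b1} \<union> names_form p0 \<union> names_form p0' \<union> names_form t \<union> names_form t'
       \<union> names_form (subst t X P1) \<union> names_form (subst t' X P1')"] by auto
    have S1: "aeq (rn (swap a1 d) (subst t X P1)) (subst (rn (swap a1 d) t) X (rn (swap a1 d) P1))"
      by (rule subst_rn) simp
    have S2: "aeq (rn (swap b1 d) (subst t' X P1')) (subst (rn (swap b1 d) t') X (rn (swap b1 d) P1'))"
      by (rule subst_rn) simp
    have E1: "rn (swap a1 d) P1 = rn (swap a d) p0"
      using A2
    proof
      assume h: "a1 \<noteq> a \<and> a1 \<notin> names_form p0 \<and> a1 \<notin> names_form t \<and> P1 = rn (swap a a1) p0"
      then show ?thesis using d by (simp, intro rn_cong) (auto simp: swap_def)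
    qed simp
    have E2: "rn (swap b1 d) P1' = rn (swap b d) p0'"
      using B2
    proof
      assume h: "b1 \<noteq> b \<and> b1 \<notin> names_form p0' \<and> b1 \<notin> names_form t' \<and> P1' = rn (swap b b1) p0'"
      then show ?thesis using d by (simp, intro rn_cong) (auto simp: swap_def)
    qed simp
    have T1: "aeq (rn (swap a1 d) t) t"
      using A(2) d FN_sub_names[of t] by (intro swap_FN_aeq) auto
    have T2: "aeq (rn (swap b1 d) t') t'"
      using B(2) d FN_sub_names[of t'] by (intro swap_FN_aeq) auto
    have Tt: "aeq (rn (swap a1 d) t) (rn (swap b1 d) t')"
      using aeq_trans[OF T1 aeq_trans[OF less.prems(2) aeq_sym[OF T2]]] .
    have Pp: "aeq (rn (swap a d) p0) (rn (swap b d) p0')"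
      using aeq_fresh_Box[of a p0 b p0' d] less.prems(1) aeq_BoxBr d by auto
    have IH: "aeq (subst (rn (swap a1 d) t) X (rn (swap a d) p0)) (subst (rn (swap b1 d) t') X (rn (swap b d) p0'))"
      by (rule less.hyps[OF _ Pp Tt]) (simp add: aeq_BoxBr)
    have "aeq (rn (swap a1 d) (subst t X P1)) (rn (swap b1 d) (subst t' X P1'))"
      using aeq_trans[OF S1[unfolded E1] aeq_trans[OF IH aeq_sym[OF S2[unfolded E2]]]] .
    then have "aeq (Box (Br a1) (subst t X P1)) (Box (Br b1) (subst t' X P1'))"
      by (rule aeq.aeq_BoxBr[rotated]) (use d in auto)
    then show ?thesis using A B aeq_BoxBr by simp
  qed auto
qed



lemma swap_comp_self[simp]: "swap a b \<circ> swap a b = id"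
  by (rule ext) simp

inductive_cases satE_Eps: "sat S w Eps"
inductive_cases satE_NEps: "sat S w NEps"
inductive_cases satE_And: "sat S w (And p q)"
inductive_cases satE_Or: "sat S w (Or p q)"
inductive_cases satE_Mu: "sat S w (Mu X p)"
inductive_cases satE_DiaPl: "sat S w (Dia (Pl a) p)"
inductive_cases satE_BoxPl: "sat S w (Box (Pl a) p)"
inductive_cases satE_DiaBr: "sat S w (Dia (Br a) p)"
inductive_cases satE_BoxBr: "sat S w (Box (Br a) p)"

lemma rs_Cons_Pl: "inj f \<Longrightarrow> rs f w = Pl (f a) # v \<Longrightarrow> \<exists>w0. w = Pl a # w0 \<and> v = rs f w0"
proof (cases w)
  case (Cons l w0)
  assume "inj f" "rs f w = Pl (f a) # v"
  then show ?thesis using Cons by (cases l) (auto simp: inj_eq)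
qed auto

lemma SI: "sat S w p \<Longrightarrow> bij f \<Longrightarrow> aeq Q (rn f p) \<Longrightarrow> sat S' (rs f w) Q"
proof (induction arbitrary: S' f Q rule: sat.induct)
  case (sat_Eps S)
  then show ?case using aeq_sym[OF sat_Eps(2)] by (auto elim: aeqE_Eps intro: sat.intros)
next
  case (sat_NEps w S)
  have "Q = NEps" using aeq_sym[OF sat_NEps(3)] by (auto elim: aeqE_NEps)
  moreover have "rs f w \<noteq> []" using sat_NEps(1) by (cases w) auto
  ultimately show ?case by (simp add: sat.sat_NEps)
next
  case (sat_And S w p q)
  from aeq_sym[OF sat_And(6)] obtain q1 q2 where "Q = And q1 q2" "aeq (rn f p) q1" "aeq (rn f q) q2"
    by (auto elim: aeqE_And)
  then show ?case using sat_And aeq_sym by (auto intro: sat.intros)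
next
  case (sat_Or1 S w p q)
  from aeq_sym[OF sat_Or1(4)] obtain q1 q2 where "Q = Or q1 q2" "aeq (rn f p) q1" "aeq (rn f q) q2"
    by (auto elim: aeqE_Or)
  then show ?case using sat_Or1 aeq_sym by (auto intro: sat.intros)
next
  case (sat_Or2 S w q p)
  from aeq_sym[OF sat_Or2(4)] obtain q1 q2 where "Q = Or q1 q2" "aeq (rn f p) q1" "aeq (rn f q) q2"
    by (auto elim: aeqE_Or)
  then show ?case using sat_Or2 aeq_sym by (auto intro: sat.intros)
next
  case (sat_Mu S w X p)
  from aeq_sym[OF sat_Mu(4)] obtain q0 where Q: "Q = Mu X q0" "aeq (rn f p) q0"
    by (auto elim: aeqE_Mu)
  have inj: "inj f" using sat_Mu(3) bij_is_inj by blast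
  have 1: "aeq (rn f (subst (Mu X p) X p)) (subst (Mu X (rn f p)) X (rn f p))"
    using subst_rn[OF inj, of "Mu X p" X p] by simp
  have 2: "aeq (subst (Mu X (rn f p)) X (rn f p)) (subst (Mu X q0) X q0)"
    using subst_aeq[OF Q(2) aeq_Mu[OF Q(2)]] .
  have "aeq (subst (Mu X q0) X q0) (rn f (subst (Mu X p) X p))"
    using aeq_sym[OF aeq_trans[OF 1 2]] .
  then have "sat S' (rs f w) (subst (Mu X q0) X q0)" using sat_Mu by blast
  then show ?case using Q by (simp add: sat.sat_Mu)
next
  case (sat_DiaPl S v p a)
  from aeq_sym[OF sat_DiaPl(4)] obtain q0 where "Q = Dia (Pl (f a)) q0" "aeq (rn f p) q0"
    by (auto elim: aeqE_DiaPl)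
  then show ?case using sat_DiaPl aeq_sym by (auto intro: sat.intros)
next
  case (sat_BoxPl w a S p)
  from aeq_sym[OF sat_BoxPl(3)] obtain q0 where Q: "Q = Box (Pl (f a)) q0" "aeq (rn f p) q0"
    by (auto elim: aeqE_BoxPl)
  have inj: "inj f" using sat_BoxPl(2) bij_is_inj by blast
  have "\<forall>v. rs f w = Pl (f a) # v \<longrightarrow> sat S' v q0"
  proof (intro allI impI)
    fix v assume "rs f w = Pl (f a) # v"
    then obtain w0 where "w = Pl a # w0" "v = rs f w0" using rs_Cons_Pl[OF inj] by blast
    then show "sat S' v q0" using sat_BoxPl(1) sat_BoxPl(2) Q aeq_sym by blast
  qed
  then show ?case using Q by (simp add: sat.sat_BoxPl)
next
  case (sat_DiaBr w b v a p q S)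
  have inj: "inj f" using sat_DiaBr(5) bij_is_inj by blast
  from aeq_sym[OF sat_DiaBr(6)] obtain a2 p2 where Q: "Q = Dia (Br a2) p2"
    by (auto elim: aeqE_DiaBr)
  have QA: "aeq (Dia (Br a2) p2) (Dia (Br (f a)) (rn f p))" using sat_DiaBr(6) Q by simp
  obtain d where d: "d \<notin> {a2, f a, f b} \<union> names_form p2 \<union> names_form (rn f p) \<union> names_str (rs f v)"
    using ex_fresh[of "{a2, f a, f b} \<union> names_form p2 \<union> names_form (rn f p) \<union> names_str (rs f v)"] by auto
  have al: "alpha (rs f w) (Br d # rs (swap (f b) d) (rs f v))"
  proof -
    have a1: "alpha (rs f w) (Br (f b) # rs f v)" using alpha_rs[OF sat_DiaBr(1) inj] by simp
    have a2: "alpha (Br (f b) # rs f v) (Br d # rs (swap (f b) d) (rs f v))"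
      using d by (intro alpha_head) auto
    show ?thesis using alpha_trans[OF a1 a2] .
  qed
  have ab: "abs_eq_form a2 p2 d (rn (swap a2 d) p2)"
    using d by (simp add: abs_eq_form_iff)
  have fr: "aeq (rn (swap a2 d) p2) (rn (swap (f a) d) (rn f p))"
    using aeq_fresh_Dia[OF QA] d by auto
  have eq: "rn (swap (f b) d \<circ> f) q = rn (swap (f a) d \<circ> f) p"
    using sat_DiaBr(2) unfolding abs_eq_form_iff
  proof
    assume h: "b \<noteq> a \<and> b \<notin> names_form p \<and> q = rn (swap a b) p"
    then show ?thesis using d inj by (simp, intro rn_cong) (auto simp: swap_def inj_eq)
  qed simp
  have "aeq (rn (swap a2 d) p2) (rn (swap (f b) d \<circ> f) q)"
    using fr eq by simp
  moreover have "bij (swap (f b) d \<circ> f)" using sat_DiaBr(5) by (simp add: bij_comp)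
  ultimately have "sat (insert d S') (rs (swap (f b) d \<circ> f) v) (rn (swap a2 d) p2)"
    using sat_DiaBr(4) by blast
  then have "sat (insert d S') (rs (swap (f b) d) (rs f v)) (rn (swap a2 d) p2)" by simp
  then show ?case using Q al ab by (auto intro: sat.sat_DiaBr)
next
  case (sat_BoxBr w a p S)
  have inj: "inj f" using sat_BoxBr(2) bij_is_inj by blast
  have surj: "surj f" using sat_BoxBr(2) bij_is_surj by blast
  from aeq_sym[OF sat_BoxBr(3)] obtain a2 p2 where Q: "Q = Box (Br a2) p2"
    by (auto elim: aeqE_BoxBr)
  have QA: "aeq (Box (Br a2) p2) (Box (Br (f a)) (rn f p))" using sat_BoxBr(3) Q by simp
  have "\<forall>q2 v2 b2. alpha (rs f w) (Br b2 # v2) \<and> abs_eq_form a2 p2 b2 q2 \<longrightarrow> sat (insert b2 S') v2 q2"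
  proof (intro allI impI, elim conjE)
    fix q2 v2 b2
    assume al2: "alpha (rs f w) (Br b2 # v2)" and ab2: "abs_eq_form a2 p2 b2 q2"
    obtain d where d: "d \<notin> {b2, a2, f a} \<union> names_form p2 \<union> names_form (rn f p) \<union> names_str v2"
      using ex_fresh[of "{b2, a2, f a} \<union> names_form p2 \<union> names_form (rn f p) \<union> names_str v2"] by auto
    define v'' where "v'' = rs (swap b2 d) v2"
    define fi where "fi = inv f"
    have fif: "fi \<circ> f = id" unfolding fi_def using inj by (simp add: inv_o_cancel)
    have ffi: "f \<circ> fi = id" unfolding fi_def using surj by (simp add: surj_iff)
    have ffid: "f (fi d) = d" using ffi by (metis comp_apply id_apply)
    have bfi: "bij fi" unfolding fi_def using sat_BoxBr(2) by (simp add: bij_imp_bij_inv)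
    have al: "alpha (rs f w) (Br d # v'')"
    proof -
      have "alpha (Br b2 # v2) (Br d # rs (swap b2 d) v2)" using d by (intro alpha_head) auto
      then show ?thesis unfolding v''_def using alpha_trans[OF al2] by blast
    qed
    have "alpha (rs fi (rs f w)) (rs fi (Br d # v''))"
      using alpha_rs[OF al bij_is_inj[OF bfi]] .
    then have al': "alpha w (Br (fi d) # rs fi v'')" using fif by simp
    have fid: "fi d \<notin> names_form p"
    proof
      assume "fi d \<in> names_form p"
      then have "f (fi d) \<in> f ` names_form p" by blast
      then show False using d ffid by simp
    qed
    have ab: "abs_eq_form a p (fi d) (rn (swap a (fi d)) p)"
      using fid by (auto simp: abs_eq_form_iff)
    have comm: "swap b2 d \<circ> f \<circ> swap a (fi d) = swap b2 d \<circ> swap (f a) d \<circ> f"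
      using swap_comp_comm[OF inj, of a "fi d"] ffid by (simp add: comp_assoc)
    have fr: "aeq (rn (swap a2 d) p2) (rn (swap (f a) d) (rn f p))"
      using aeq_fresh_Box[OF QA] d by auto
    have fr2: "aeq (rn (swap b2 d) (rn (swap a2 d) p2)) (rn (swap b2 d) (rn (swap (f a) d) (rn f p)))"
      using aeq_rn[OF fr] by simp
    have q2: "rn (swap b2 d) (rn (swap a2 d) p2) = q2"
      using ab2 unfolding abs_eq_form_iff
    proof
      assume h: "b2 \<noteq> a2 \<and> b2 \<notin> names_form p2 \<and> q2 = rn (swap a2 b2) p2"
      then show ?thesis using d by (simp, intro rn_cong) (auto simp: swap_def)
    qed simp
    have "aeq q2 (rn (swap b2 d \<circ> f) (rn (swap a (fi d)) p))"
      using fr2 q2 comm by (simp add: comp_assoc)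
    moreover have "bij (swap b2 d \<circ> f)" using sat_BoxBr(2) by (simp add: bij_comp)
    ultimately have "sat (insert b2 S') (rs (swap b2 d \<circ> f) (rs fi v'')) q2"
      using sat_BoxBr(1) al' ab by blast
    moreover have "rs (swap b2 d \<circ> f) (rs fi v'') = v2"
    proof -
      have ffi': "\<And>y. f (fi y) = y" using ffi by (metis comp_apply id_apply)
      show ?thesis unfolding v''_def by (simp add: comp_def ffi')
    qed
    ultimately show "sat (insert b2 S') v2 q2" by simp
  qed
  then show ?case using Q by (simp add: sat.sat_BoxBr)
qed

lemma SI_rn: "sat S w p \<Longrightarrow> bij f \<Longrightarrow> sat S' (rs f w) (rn f p)"
  using SI by blast

lemma SI_aeq: "sat S w p \<Longrightarrow> aeq q p \<Longrightarrow> sat S' w q"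
  using SI[of S w p id q S'] by simp



lemma swap_eq_simps[simp]: "swap a b y = b \<longleftrightarrow> y = a" "swap a b y = a \<longleftrightarrow> y = b"
  by (auto simp: swap_def)

lemma sat_Eps_iff[simp]: "sat S w Eps \<longleftrightarrow> w = []"
  by (auto elim: satE_Eps intro: sat.intros)
lemma sat_NEps_iff[simp]: "sat S w NEps \<longleftrightarrow> w \<noteq> []"
  by (auto elim: satE_NEps intro: sat.intros)
lemma sat_And_iff[simp]: "sat S w (And p q) \<longleftrightarrow> sat S w p \<and> sat S w q"
  by (auto elim: satE_And intro: sat.intros)
lemma sat_Or_iff[simp]: "sat S w (Or p q) \<longleftrightarrow> sat S w p \<or> sat S w q"
  by (auto elim: satE_Or intro: sat.intros)
lemma sat_Top[simp]: "sat S w Top"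
  by (simp add: Top_def)
lemma sat_Bot[simp]: "\<not> sat S w Bot"
  by (simp add: Bot_def)
lemma sat_DiaPl_iff[simp]: "sat S w (Dia (Pl b) p) \<longleftrightarrow> (\<exists>w'. w = Pl b # w' \<and> sat S w' p)"
  by (auto elim: satE_DiaPl intro: sat.intros)
lemma sat_BoxPl_iff[simp]: "sat S w (Box (Pl b) p) \<longleftrightarrow> (\<forall>w'. w = Pl b # w' \<longrightarrow> sat S w' p)"
  by (auto elim: satE_BoxPl intro: sat.intros)
lemma sat_Mu_iff: "sat S w (Mu X p) \<longleftrightarrow> sat S w (subst (Mu X p) X p)"
  by (auto elim: satE_Mu intro: sat.intros)

lemma sat_Disj: "sat S w (Disj ps) \<longleftrightarrow> (\<exists>p\<in>set ps. sat S w p)"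
  by (induction ps) (auto simp: Disj_def)

lemma sat_DiaSet: "finite D \<Longrightarrow> sat S w (DiaSet D) \<longleftrightarrow> (\<exists>d\<in>D. \<exists>w'. w = Pl d # w')"
  by (auto simp: DiaSet_def sat_Disj)

lemma sat_DiaBarTop: "sat S w DiaBarTop \<longleftrightarrow> (\<exists>e w'. w = Br e # w')"
proof
  assume "sat S w DiaBarTop"
  then obtain b v where "alpha w (Br b # v)" unfolding DiaBarTop_def by (auto elim: satE_DiaBr)
  then show "\<exists>e w'. w = Br e # w'" by (rule alpha_Br_shape)
next
  assume "\<exists>e w'. w = Br e # w'"
  then obtain e w' where w: "w = Br e # w'" by blast
  have "abs_eq_form 0 Top e Top" by (auto simp: abs_eq_form_iff Top_def)
  then show "sat S w DiaBarTop" unfolding DiaBarTop_def w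
    by (intro sat_DiaBr[OF alpha_refl]) auto
qed

lemma bind_name_props:
  assumes "finite B" "finite C" "c = bind_name B C a b p"
  shows "c \<notin> B" "c \<notin> C" "\<forall>x. a = Some x \<longrightarrow> x \<noteq> c" "c = b \<or> c \<notin> names_form p"
proof -
  have fin: "finite (B \<union> C \<union> set_option a \<union> insert b (names_form p))" using assms by simp
  have "c \<notin> B \<and> c \<notin> C \<and> c \<notin> set_option a \<and> (c = b \<or> c \<notin> names_form p)"
    using fresh_notin[OF fin] assms(3) unfolding bind_name_def by (auto split: if_splits)
  then show "c \<notin> B" "c \<notin> C" "\<forall>x. a = Some x \<longrightarrow> x \<noteq> c" "c = b \<or> c \<notin> names_form p" by auto
qed

definition cond_i :: "name set \<Rightarrow> name option \<Rightarrow> bstr \<Rightarrow> bool" where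
  "cond_i B a v \<longleftrightarrow> (\<forall>x. a = Some x \<longrightarrow>
           (\<forall>i d. free_occ v i d \<and> (\<forall>j\<le>i. \<not> free_occ v j x) \<longrightarrow> d \<in> B))"

definition cond_ii :: "name set \<Rightarrow> name set \<Rightarrow> name set \<Rightarrow> bstr \<Rightarrow> bool" where
  "cond_ii B C F v \<longleftrightarrow> (\<forall>i d. free_occ v i d \<and> d \<notin> B \<and> (\<forall>j<i. \<forall>e. free_occ v j e \<longrightarrow> e \<in> B)
           \<and> d \<in> F \<longrightarrow> d \<in> C)"

lemma cond_i_None[simp]: "cond_i B None v"
  by (simp add: cond_i_def)

lemma cond_ii_self[simp]: "cond_ii {} F F v"
  by (simp add: cond_ii_def)

lemma cond_ii_mono: "F' \<subseteq> F \<Longrightarrow> cond_ii B C F v \<Longrightarrow> cond_ii B C F' v"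
  unfolding cond_ii_def by blast

lemma cond_i_Pl:
  assumes bB: "b \<in> B" and aB: "\<forall>x. a = Some x \<longrightarrow> x \<notin> B" and ci: "cond_i B a (Pl b # v)"
  shows "cond_i B a v"
  unfolding cond_i_def
proof (intro allI impI, elim conjE)
  fix x i d assume ax: "a = Some x" and fo: "free_occ v i d" and nx: "\<forall>j\<le>i. \<not> free_occ v j x"
  have "\<forall>j \<le> Suc i. \<not> free_occ (Pl b # v) j x"
  proof (intro allI impI)
    fix j assume "j \<le> Suc i"
    then show "\<not> free_occ (Pl b # v) j x" using nx ax aB bB by (cases j) auto
  qed
  moreover have "free_occ (Pl b # v) (Suc i) d" using fo by simp
  ultimately show "d \<in> B" using ci ax unfolding cond_i_def by blast
qed

lemma cond_ii_Pl:
  assumes bB: "b \<in> B" and cii: "cond_ii B C F (Pl b # v)" and sub: "F' \<subseteq> F"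
  shows "cond_ii B C F' v"
  unfolding cond_ii_def
proof (intro allI impI, elim conjE)
  fix i d assume fo: "free_occ v i d" and dB: "d \<notin> B" and before: "\<forall>j<i. \<forall>e. free_occ v j e \<longrightarrow> e \<in> B"
    and dF: "d \<in> F'"
  have "\<forall>j < Suc i. \<forall>e. free_occ (Pl b # v) j e \<longrightarrow> e \<in> B"
  proof (intro allI impI)
    fix j e assume "j < Suc i" "free_occ (Pl b # v) j e"
    then show "e \<in> B" using before bB by (cases j) auto
  qed
  moreover have "free_occ (Pl b # v) (Suc i) d" using fo by simp
  ultimately show "d \<in> C" using cii dB dF sub unfolding cond_ii_def by blast
qed

lemma head_ii: "cond_ii B C F (Pl b # v) \<Longrightarrow> b \<notin> B \<Longrightarrow> b \<in> F \<Longrightarrow> b \<in> C"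
  unfolding cond_ii_def by (metis free_occ_Pl0 not_less_zero)

lemma head_i: "cond_i B (Some x) (Pl d # v) \<Longrightarrow> d \<noteq> x \<Longrightarrow> d \<in> B"
  unfolding cond_i_def by (metis free_occ_Pl0 le_zero_eq)

lemma bar_conds:
  assumes al: "alpha v (Br d # v'')" and dv: "d \<notin> names_str v" and dB: "d \<notin> B"
    and da: "\<forall>x. a = Some x \<longrightarrow> x \<noteq> d"
    and cB: "c \<notin> B" and ca: "\<forall>x. a = Some x \<longrightarrow> x \<noteq> c" and cd: "c \<noteq> d" and dP: "d \<notin> FN P"
    and ci: "cond_i B a v" and cii: "cond_ii B C (FN P - {c}) v"
  shows "cond_i (insert c B) a (rs (swap c d) v'')"
    "cond_ii (insert c B) (insert c C) (FN P) (rs (swap c d) v'')"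
    "length (rs (swap c d) v'') = length v - 1"
proof -
  let ?u = "rs (swap c d) v''"
  have FOv: "\<And>i z. free_occ v (Suc i) z \<longleftrightarrow> free_occ v'' i z \<and> z \<noteq> d"
    using alpha_free_occ[OF al] by simp
  have FOu: "\<And>i y. free_occ ?u i y \<longleftrightarrow> free_occ v'' i (swap c d y)"
    using free_occ_rs[of "swap c d" v''] by (metis inj_swap swap_simps(4))
  have FO1: "\<And>i y. y \<noteq> c \<Longrightarrow> free_occ ?u i y \<longleftrightarrow> free_occ v (Suc i) (swap c d y)"
    using FOu FOv by simp
  obtain e v0 where "v = Br e # v0" using alpha_Br_shape[OF al] by blast
  then have v0: "\<And>z. \<not> free_occ v 0 z" by simp
  have vd: "\<And>k. \<not> free_occ v k d" using dv free_occ_names by blast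
  show "cond_i (insert c B) a ?u"
    unfolding cond_i_def
  proof (intro allI impI, elim conjE)
    fix x i y assume ax: "a = Some x" and fy: "free_occ ?u i y" and nx: "\<forall>j\<le>i. \<not> free_occ ?u j x"
    show "y \<in> insert c B"
    proof (cases "y = c")
      case True then show ?thesis by simp
    next
      case False
      have xc: "x \<noteq> c" "x \<noteq> d" using ca da ax by auto
      have "\<forall>j \<le> Suc i. \<not> free_occ v j x"
      proof (intro allI impI)
        fix j assume j: "j \<le> Suc i"
        show "\<not> free_occ v j x"
        proof (cases j)
          case 0 then show ?thesis using v0 by simp
        next
          case (Suc k)
          then have "\<not> free_occ ?u k x" using nx j by simp
          then show ?thesis using FO1[of x k] xc Suc by simp
        qed
      qed
      moreover have "free_occ v (Suc i) (swap c d y)" using FO1[OF False] fy by simp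
      ultimately have "swap c d y \<in> B" using ci ax unfolding cond_i_def by blast
      then show ?thesis using cB dB False by (auto simp: swap_def split: if_splits)
    qed
  qed
  show "cond_ii (insert c B) (insert c C) (FN P) ?u"
    unfolding cond_ii_def
  proof (intro allI impI, elim conjE)
    fix i y assume fy: "free_occ ?u i y" and yB: "y \<notin> insert c B"
      and before: "\<forall>j<i. \<forall>e. free_occ ?u j e \<longrightarrow> e \<in> insert c B" and yP: "y \<in> FN P"
    have yc: "y \<noteq> c" using yB by simp
    have yd: "y \<noteq> d" using yP dP by auto
    have fv: "free_occ v (Suc i) y" using FO1[OF yc] fy yc yd by simp
    have "\<forall>j<Suc i. \<forall>e. free_occ v j e \<longrightarrow> e \<in> B"
    proof (intro allI impI)
      fix j e assume j: "j < Suc i" and fe: "free_occ v j e"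
      then obtain k where k: "j = Suc k" "k < i" using v0 by (cases j) auto
      have ed: "e \<noteq> d" using vd fe by blast
      show "e \<in> B"
      proof (cases "e = c")
        case True
        have "free_occ ?u k d" using FO1[of d k] cd fe k True by simp
        then have "d \<in> insert c B" using before k by blast
        then show ?thesis using cd dB by simp
      next
        case False
        have "free_occ ?u k e" using FO1[OF False, of k] fe k False ed by simp
        then have "e \<in> insert c B" using before k by blast
        then show ?thesis using False by simp
      qed
    qed
    moreover have "y \<notin> B" using yB by simp
    moreover have "y \<in> FN P - {c}" using yP yc by simp
    ultimately have "y \<in> C" using cii fv unfolding cond_ii_def by blast
    then show "y \<in> insert c C" by simp
  qed
  show "length ?u = length v - 1" using alpha_len[OF al] by simp
qed

lemma dia_transfer:
  assumes sat: "sat S v (Dia (Br c) P)" and fin: "finite F"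
    and step: "\<And>d v''. alpha v (Br d # v'') \<Longrightarrow> d \<notin> F \<Longrightarrow> d \<notin> names_form P \<Longrightarrow> d \<notin> names_form R
       \<Longrightarrow> d \<noteq> c \<Longrightarrow> d \<notin> names_str v \<Longrightarrow> sat S (rs (swap c d) v'') P \<Longrightarrow> sat S (rs (swap c d) v'') R"
  shows "sat S' v (Dia (Br c) R)"
proof -
  from sat obtain b' v' q' where al: "alpha v (Br b' # v')" and ab: "abs_eq_form c P b' q'"
    and sq: "sat (insert b' S) v' q'" by (auto elim: satE_DiaBr)
  obtain d where d: "d \<notin> F \<union> names_form P \<union> names_form R \<union> {c, b'} \<union> names_str v \<union> names_str v'"
    using ex_fresh[of "F \<union> names_form P \<union> names_form R \<union> {c, b'} \<union> names_str v \<union> names_str v'"] fin by auto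
  define v'' where "v'' = rs (swap b' d) v'"
  have "alpha (Br b' # v') (Br d # v'')" unfolding v''_def using d by (intro alpha_head) auto
  then have al2: "alpha v (Br d # v'')" using alpha_trans[OF al] by blast
  have eqP: "rn (swap c d \<circ> swap b' d) q' = P"
    using ab unfolding abs_eq_form_iff
  proof
    assume h: "b' \<noteq> c \<and> b' \<notin> names_form P \<and> q' = rn (swap c b') P"
    have "rn (swap c d \<circ> swap b' d) (rn (swap c b') P) = rn id P"
      by (simp only: rn_comp, intro rn_cong) (use h d in \<open>auto simp: swap_def\<close>)
    then show ?thesis using h by simp
  qed (simp add: comp_def)
  have "sat S (rs (swap c d \<circ> swap b' d) v') (rn (swap c d \<circ> swap b' d) q')"
    using SI_rn[OF sq] by (simp add: bij_comp)
  then have sP: "sat S (rs (swap c d) v'') P" using eqP by (simp add: v''_def)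
  have sR: "sat S (rs (swap c d) v'') R" using step[OF al2 _ _ _ _ _ sP] d by auto
  have "sat (insert d S') (rs (swap c d) (rs (swap c d) v'')) (rn (swap c d) R)"
    using SI_rn[OF sR bij_swap[of c d]] by blast
  then have "sat (insert d S') v'' (rn (swap c d) R)" by (simp add: comp_def)
  moreover have "abs_eq_form c R d (rn (swap c d) R)" using d by (auto simp: abs_eq_form_iff)
  ultimately show ?thesis by (intro sat_DiaBr[OF al2])
qed

lemma box_transfer:
  assumes sat: "sat S v (Box (Br c) P)" and fin: "finite F"
    and step: "\<And>d v''. alpha v (Br d # v'') \<Longrightarrow> d \<notin> F \<Longrightarrow> d \<notin> names_form P \<Longrightarrow> d \<notin> names_form R
       \<Longrightarrow> d \<noteq> c \<Longrightarrow> d \<notin> names_str v \<Longrightarrow> sat S (rs (swap c d) v'') P \<Longrightarrow> sat S (rs (swap c d) v'') R"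
  shows "sat S' v (Box (Br c) R)"
proof -
  have all: "\<forall>q v' b. alpha v (Br b # v') \<and> abs_eq_form c P b q \<longrightarrow> sat (insert b S) v' q"
    using sat by (auto elim: satE_BoxBr)
  have "\<forall>q2 v2 b2. alpha v (Br b2 # v2) \<and> abs_eq_form c R b2 q2 \<longrightarrow> sat (insert b2 S') v2 q2"
  proof (intro allI impI, elim conjE)
    fix q2 v2 b2 assume al: "alpha v (Br b2 # v2)" and ab: "abs_eq_form c R b2 q2"
    obtain d where d: "d \<notin> F \<union> names_form P \<union> names_form R \<union> {c, b2} \<union> names_str v \<union> names_str v2"
      using ex_fresh[of "F \<union> names_form P \<union> names_form R \<union> {c, b2} \<union> names_str v \<union> names_str v2"] fin by auto
    define v'' where "v'' = rs (swap b2 d) v2"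
    have "alpha (Br b2 # v2) (Br d # v'')" unfolding v''_def using d by (intro alpha_head) auto
    then have al2: "alpha v (Br d # v'')" using alpha_trans[OF al] by blast
    have "abs_eq_form c P d (rn (swap c d) P)" using d by (auto simp: abs_eq_form_iff)
    then have "sat (insert d S) v'' (rn (swap c d) P)" using all al2 by blast
    then have "sat S (rs (swap c d) v'') (rn (swap c d) (rn (swap c d) P))"
      using SI_rn[OF _ bij_swap[of c d]] by blast
    then have sP: "sat S (rs (swap c d) v'') P" by (simp add: comp_def)
    have sR: "sat S (rs (swap c d) v'') R" using step[OF al2 _ _ _ _ _ sP] d by auto
    have "sat (insert b2 S') (rs (swap b2 d \<circ> swap c d) (rs (swap c d) v'')) (rn (swap b2 d \<circ> swap c d) R)"
      using SI_rn[OF sR] by (simp add: bij_comp)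
    moreover have "rs (swap b2 d \<circ> swap c d) (rs (swap c d) v'') = v2"
      by (simp add: v''_def comp_def)
    moreover have "rn (swap b2 d \<circ> swap c d) R = q2"
      using ab unfolding abs_eq_form_iff
    proof
      assume h: "b2 \<noteq> c \<and> b2 \<notin> names_form R \<and> q2 = rn (swap c b2) R"
      then show ?thesis using d by (simp, intro rn_cong) (auto simp: swap_def)
    qed (simp add: comp_def)
    ultimately show "sat (insert b2 S') v2 q2" by simp
  qed
  then show ?thesis by (rule sat_BoxBr)
qed



lemma main:
  assumes "finite B" "finite C" "B \<subseteq> C" "\<forall>x. a = Some x \<longrightarrow> x \<notin> B" "fv p = {}" "guarded p"
    "cond_i B a v" "cond_ii B C (FN p) v" "length v < n"
  shows "sat S v p = sat S v (restr B C a n p)"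
  using assms
proof (induction B C a n p arbitrary: S v rule: restr.induct)
  case (1 B C a p)
  then show ?case by simp
next
  case (2 B C a m) then show ?case by simp
next
  case (3 B C a m) then show ?case by simp
next
  case (4 B C a m p q S v)
  have c1: "cond_ii B C (FN p) v" "cond_ii B C (FN q) v"
    using cond_ii_mono[OF _ "4.prems"(8)] by auto
  have "sat S v p = sat S v (restr B C a (Suc m) p)"
    by (rule "4.IH"(1)) (use "4.prems" c1 in auto)
  moreover have "sat S v q = sat S v (restr B C a (Suc m) q)"
    by (rule "4.IH"(2)) (use "4.prems" c1 in auto)
  ultimately show ?case by simp
next
  case (5 B C a m p q S v)
  have c1: "cond_ii B C (FN p) v" "cond_ii B C (FN q) v"
    using cond_ii_mono[OF _ "5.prems"(8)] by auto
  have "sat S v p = sat S v (restr B C a (Suc m) p)"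
    by (rule "5.IH"(1)) (use "5.prems" c1 in auto)
  moreover have "sat S v q = sat S v (restr B C a (Suc m) q)"
    by (rule "5.IH"(2)) (use "5.prems" c1 in auto)
  ultimately show ?case by simp
next
  case (6 B C a m b p S v)
  define c where "c = bind_name B C a b p"
  note cp = bind_name_props[OF "6.prems"(1,2) c_def]
  define p' where "p' = rn (swap b c) p"
  define r where "r = restr (insert c B) (insert c C) a m p'"
  have restr_eq: "restr B C a (Suc m) (Dia (Br b) p) = Dia (Br c) r"
    by (simp add: Let_def c_def[symmetric] r_def p'_def perm_form_rn)
  have FNp': "FN p' - {c} = FN (Dia (Br b) p)"
    using cp(4) FN_swap_fresh[of c p b] by (auto simp: p'_def)
  have IH: "\<And>S u. cond_i (insert c B) a u \<Longrightarrow> cond_ii (insert c B) (insert c C) (FN p') u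
      \<Longrightarrow> length u < m \<Longrightarrow> sat S u p' = sat S u r"
    unfolding r_def p'_def perm_form_rn[symmetric]
    by (rule "6.IH"[OF c_def]) (use "6.prems" cp in \<open>auto simp: perm_form_rn\<close>)
  have e1: "sat S v (Dia (Br b) p) = sat S v (Dia (Br c) p')"
    using SI_aeq aeq_rename_Dia[OF cp(4)] aeq_sym unfolding p'_def by blast
  define F where "F = B \<union> C \<union> set_option a \<union> {c}"
  have finF: "finite F" using "6.prems" by (simp add: F_def)
  have key: "\<And>d v''. alpha v (Br d # v'') \<Longrightarrow> d \<notin> F \<Longrightarrow> d \<notin> names_form p' \<Longrightarrow> d \<notin> names_form r
      \<Longrightarrow> d \<noteq> c \<Longrightarrow> d \<notin> names_str v \<Longrightarrow> sat S (rs (swap c d) v'') p' = sat S (rs (swap c d) v'') r"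
  proof -
    fix d v'' assume al: "alpha v (Br d # v'')" and dF: "d \<notin> F" and dp: "d \<notin> names_form p'"
      and dr: "d \<notin> names_form r" and dc: "d \<noteq> c" and dv: "d \<notin> names_str v"
    have dP: "d \<notin> FN p'" using dp FN_sub_names by blast
    have cii: "cond_ii B C (FN p' - {c}) v" using "6.prems"(8) FNp' by simp
    have dB: "d \<notin> B" and da: "\<forall>x. a = Some x \<longrightarrow> x \<noteq> d" using dF by (auto simp: F_def)
    note bc = bar_conds[OF al dv dB da cp(1) cp(3) dc[symmetric] dP "6.prems"(7) cii]
    show "sat S (rs (swap c d) v'') p' = sat S (rs (swap c d) v'') r"
      by (rule IH) (use bc "6.prems"(9) alpha_len[OF al] in auto)
  qed
  show ?case unfolding restr_eq e1
  proof
    assume "sat S v (Dia (Br c) p')"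
    then show "sat S v (Dia (Br c) r)" by (rule dia_transfer[OF _ finF]) (use key in blast)
  next
    assume "sat S v (Dia (Br c) r)"
    then show "sat S v (Dia (Br c) p')" by (rule dia_transfer[OF _ finF]) (use key in blast)
  qed
next
  case (7 B C a m b p S v)
  define c where "c = bind_name B C a b p"
  note cp = bind_name_props[OF "7.prems"(1,2) c_def]
  define p' where "p' = rn (swap b c) p"
  define r where "r = restr (insert c B) (insert c C) a m p'"
  have restr_eq: "restr B C a (Suc m) (Box (Br b) p) = Box (Br c) r"
    by (simp add: Let_def c_def[symmetric] r_def p'_def perm_form_rn)
  have FNp': "FN p' - {c} = FN (Box (Br b) p)"
    using cp(4) FN_swap_fresh[of c p b] by (auto simp: p'_def)
  have IH: "\<And>S u. cond_i (insert c B) a u \<Longrightarrow> cond_ii (insert c B) (insert c C) (FN p') u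
      \<Longrightarrow> length u < m \<Longrightarrow> sat S u p' = sat S u r"
    unfolding r_def p'_def perm_form_rn[symmetric]
    by (rule "7.IH"[OF c_def]) (use "7.prems" cp in \<open>auto simp: perm_form_rn\<close>)
  have e1: "sat S v (Box (Br b) p) = sat S v (Box (Br c) p')"
    using SI_aeq aeq_rename_Box[OF cp(4)] aeq_sym unfolding p'_def by blast
  define F where "F = B \<union> C \<union> set_option a \<union> {c}"
  have finF: "finite F" using "7.prems" by (simp add: F_def)
  have key: "\<And>d v''. alpha v (Br d # v'') \<Longrightarrow> d \<notin> F \<Longrightarrow> d \<notin> names_form p' \<Longrightarrow> d \<notin> names_form r
      \<Longrightarrow> d \<noteq> c \<Longrightarrow> d \<notin> names_str v \<Longrightarrow> sat S (rs (swap c d) v'') p' = sat S (rs (swap c d) v'') r"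
  proof -
    fix d v'' assume al: "alpha v (Br d # v'')" and dF: "d \<notin> F" and dp: "d \<notin> names_form p'"
      and dr: "d \<notin> names_form r" and dc: "d \<noteq> c" and dv: "d \<notin> names_str v"
    have dP: "d \<notin> FN p'" using dp FN_sub_names by blast
    have cii: "cond_ii B C (FN p' - {c}) v" using "7.prems"(8) FNp' by simp
    have dB: "d \<notin> B" and da: "\<forall>x. a = Some x \<longrightarrow> x \<noteq> d" using dF by (auto simp: F_def)
    note bc = bar_conds[OF al dv dB da cp(1) cp(3) dc[symmetric] dP "7.prems"(7) cii]
    show "sat S (rs (swap c d) v'') p' = sat S (rs (swap c d) v'') r"
      by (rule IH) (use bc "7.prems"(9) alpha_len[OF al] in auto)
  qed
  show ?case unfolding restr_eq e1
  proof
    assume "sat S v (Box (Br c) p')"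
    then show "sat S v (Box (Br c) r)" by (rule box_transfer[OF _ finF]) (use key in blast)
  next
    assume "sat S v (Box (Br c) r)"
    then show "sat S v (Box (Br c) p')" by (rule box_transfer[OF _ finF]) (use key in blast)
  qed
next
  case (8 B C a m X p S v)
  have ng: "\<not> unguarded X p" using "8.prems"(6) by simp
  have fvs: "fv (subst (Mu X p) X p) = {}" using fv_subst[of "Mu X p" X p] "8.prems"(5) by auto
  have gs: "guarded (subst (Mu X p) X p)" using guarded_subst[of p "Mu X p" X] "8.prems"(5,6) by simp
  have cs: "cond_ii B C (FN (subst (Mu X p) X p)) v"
    using cond_ii_mono[OF _ "8.prems"(8)] FN_subst[of "Mu X p" X p] by auto
  have "sat S v (subst (Mu X p) X p) = sat S v (restr B C a (Suc m) (subst (Mu X p) X p))"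
    by (rule "8.IH"[OF ng]) (use "8.prems" fvs gs cs in auto)
  then show ?case using ng by (simp add: sat_Mu_iff)
next
  case (9 B C a m X) then show ?case by simp
next
  case (10 B C a m b p S v)
  have sub: "FN p \<subseteq> FN (Dia (Pl b) p)" by auto
  consider (nC) "b \<notin> C" | (inB) "b \<in> B" | (CB) "b \<in> C" "b \<notin> B" using "10.prems"(3) by blast
  then show ?case
  proof cases
    case nC
    have "\<not> sat S v (Dia (Pl b) p)"
    proof
      assume "sat S v (Dia (Pl b) p)"
      then obtain v' where "v = Pl b # v'" by auto
      then have "b \<in> C" using head_ii[of B C "FN (Dia (Pl b) p)" b v'] "10.prems"(3,8) nC by auto
      then show False using nC by simp
    qed
    then show ?thesis using nC by simp
  next
    case inB
    have IHv: "\<And>v'. v = Pl b # v' \<Longrightarrow> sat S v' p = sat S v' (restr B C a m p)"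
    proof -
      fix v' assume v: "v = Pl b # v'"
      show "sat S v' p = sat S v' (restr B C a m p)"
        by (rule "10.IH"(1)) (use "10.prems" inB v cond_i_Pl[OF inB] cond_ii_Pl[OF inB _ sub] in auto)
    qed
    show ?thesis using inB "10.prems"(3) IHv by auto
  next
    case CB
    have IHv: "\<And>v'. v = Pl b # v' \<Longrightarrow> sat S v' p = sat S v' (restr {} (FN p) None m p)"
    proof -
      fix v' assume v: "v = Pl b # v'"
      show "sat S v' p = sat S v' (restr {} (FN p) None m p)"
        by (rule "10.IH"(2)) (use "10.prems" CB v in auto)
    qed
    show ?thesis using CB IHv by auto
  qed
next
  case (11 B C a m b p S v)
  have sub: "FN p \<subseteq> FN (Box (Pl b) p)" by auto
  have star: "\<And>v'. v = Pl b # v' \<Longrightarrow> b \<notin> B \<Longrightarrow> (b \<notin> C \<and> a = None) \<or> (b \<in> C \<and> a = None) \<or> (b \<in> C \<and> a = Some b)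
     \<Longrightarrow> sat S v' p = sat S v' (restr {} (FN p) None m p)"
  proof -
    fix v' assume v: "v = Pl b # v'" and bB: "b \<notin> B"
      and h: "(b \<notin> C \<and> a = None) \<or> (b \<in> C \<and> a = None) \<or> (b \<in> C \<and> a = Some b)"
    have len: "length v' < m" using v "11.prems"(9) by simp
    from h consider "b \<notin> C" "a = None" | "b \<in> C" "a = None" | "b \<in> C" "a = Some b" by blast
    then show "sat S v' p = sat S v' (restr {} (FN p) None m p)"
    proof cases
      case 1 then show ?thesis by (intro "11.IH"(1)) (use "11.prems" len in auto)
    next
      case 2 then show ?thesis by (intro "11.IH"(3)) (use "11.prems" len bB in auto)
    next
      case 3 then show ?thesis by (intro "11.IH"(4)) (use "11.prems" len bB in auto)
    qed
  qed
  have bothtrue: "sat S v (Box (Pl b) p)" if "\<not> (\<exists>v'. v = Pl b # v')"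
    using that by auto
  have rhs_true: "sat S v (Or Eps (Or DiaBarTop (DiaSet (B \<union> {x}))))" if ax: "a = Some x" for x
  proof (cases v)
    case Nil then show ?thesis by simp
  next
    case (Cons l v')
    show ?thesis
    proof (cases l)
      case (Br e) then show ?thesis using Cons by (simp add: sat_DiaBarTop)
    next
      case (Pl d)
      have "d \<in> B \<union> {x}" using head_i[of B x d v'] "11.prems"(7) Cons Pl ax by auto
      then show ?thesis using Cons Pl "11.prems"(1) by (auto simp: sat_DiaSet)
    qed
  qed
  consider (nCa) "b \<notin> C" "a \<noteq> None" | (nCn) "b \<notin> C" "a = None" | (inB) "b \<in> B"
    | (CBn) "b \<in> C" "b \<notin> B" "a = None" | (CBb) "b \<in> C" "b \<notin> B" "a = Some b"
    | (CBx) x where "b \<in> C" "b \<notin> B" "a = Some x" "x \<noteq> b"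
    using "11.prems"(3) by (cases a) auto
  then show ?case
  proof cases
    case nCa
    then obtain x where ax: "a = Some x" by auto
    have "\<not> (\<exists>v'. v = Pl b # v')"
    proof
      assume "\<exists>v'. v = Pl b # v'"
      then obtain v' where "v = Pl b # v'" by blast
      then have "b \<in> C" using head_ii[of B C "FN (Box (Pl b) p)" b v'] "11.prems"(3,8) nCa by auto
      then show False using nCa by simp
    qed
    then show ?thesis using bothtrue rhs_true[OF ax] nCa ax by simp
  next
    case nCn
    then show ?thesis using star "11.prems"(3) by auto
  next
    case inB
    have IHv: "\<And>v'. v = Pl b # v' \<Longrightarrow> sat S v' p = sat S v' (restr B C a m p)"
    proof -
      fix v' assume v: "v = Pl b # v'"
      show "sat S v' p = sat S v' (restr B C a m p)"
        by (rule "11.IH"(2)) (use "11.prems" inB v cond_i_Pl[OF inB] cond_ii_Pl[OF inB _ sub] in auto)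
    qed
    show ?thesis using inB "11.prems"(3) IHv by auto
  next
    case CBn
    then show ?thesis using star by auto
  next
    case CBb
    have r: "restr B C a (Suc m) (Box (Pl b) p) =
        Or Eps (Or DiaBarTop (Or (DiaSet B) (Dia (Pl b) (restr {} (FN p) None m p))))"
      using CBb by simp
    show ?thesis
    proof (cases v)
      case Nil then show ?thesis using r by simp
    next
      case (Cons l v')
      show ?thesis
      proof (cases l)
        case (Br e) then show ?thesis using Cons r by (simp add: sat_DiaBarTop)
      next
        case (Pl d)
        show ?thesis
        proof (cases "d = b")
          case True
          then show ?thesis using r Cons Pl star[of v'] CBb "11.prems"(1) by (auto simp: sat_DiaSet sat_DiaBarTop)
        next
          case False
          have "d \<in> B" using head_i[of B b d v'] "11.prems"(7) Cons Pl CBb False by auto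
          then show ?thesis using r Cons Pl False "11.prems"(1) by (auto simp: sat_DiaSet)
        qed
      qed
    qed
  next
    case CBx
    have "\<not> (\<exists>v'. v = Pl b # v')"
    proof
      assume "\<exists>v'. v = Pl b # v'"
      then obtain v' where "v = Pl b # v'" by blast
      then have "b \<in> B" using head_i[of B x b v'] "11.prems"(7) CBx by auto
      then show False using CBx by simp
    qed
    then show ?thesis using bothtrue rhs_true[OF CBx(3)] CBx by simp
  qed
qed


theorem lemma6p3:
  fixes B C S :: "name set" and a :: "name option" and phi :: form and v :: bstr
  assumes "finite B" and "finite C" and "B \<subseteq> C"
    and "\<forall>x. a = Some x \<longrightarrow> x \<notin> B"
    and "finite S"
    and "bar_formula phi"
    and "FN phi \<subseteq> S" and "FN_str v \<subseteq> S"
    and "\<forall>x. a = Some x \<longrightarrow>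
           (\<forall>i d. free_occ v i d \<and> (\<forall>j\<le>i. \<not> free_occ v j x) \<longrightarrow> d \<in> B)"
    and "\<forall>i d. free_occ v i d \<and> d \<notin> B \<and> (\<forall>j<i. \<forall>e. free_occ v j e \<longrightarrow> e \<in> B)
           \<and> d \<in> FN phi \<longrightarrow> d \<in> C"
  shows "\<forall>n. length v < n \<longrightarrow> (sat S v phi \<longleftrightarrow> sat S v (restr B C a n phi))"
proof (intro allI impI)
  fix n assume len: "length v < n"
  have ci: "cond_i B a v" using assms(9) unfolding cond_i_def by blast
  have cii: "cond_ii B C (FN phi) v" using assms(10) unfolding cond_ii_def by blast
  have bf: "fv phi = {}" "guarded phi" using assms(6) unfolding bar_formula_def by auto
  show "sat S v phi \<longleftrightarrow> sat S v (restr B C a n phi)"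
    using main[OF assms(1-4) bf ci cii len] .
qed

end
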